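(* Let $2\le m\le n$ be natural numbers with $n\equiv m \pmod{m-1}$, and let $G\le\operatorname{Sym}(m)$. Then there exists $H\le\operatorname{Sym}(n)$ such that $V_m(G)$ embeds (as a group) in $V_n(H)$.
   Context: For $r\ge 2$ let $\mathcal{A}_r=\{0,1,\dots,r-1\}$, let $\mathcal{A}_r^*$ be the set of finite words over $\mathcal{A}_r$ (including the empty word), and let $\mathfrak{C}_r=\mathcal{A}_r^{\mathbb{N}}$ (infinite words, product topology). For $u\in\mathcal{A}_r^*$ and $v$ a finite or infinite word, $uv$ denotes concatenation, and $u\le_{pref} v$ means $v=uw$ for some word $w$. A (complete) prefix code of $\mathfrak{C}_r$ is a finite set $S\subset\mathcal{A}_r^*$ such that every $\zeta\in\mathfrak{C}_r$ has exactly one $s\in S$ with $s\le_{pref}\zeta$. A permutation $\sigma\in\operatorname{Sym}(r)$ acts on words letterwise: $\sigma(z_1z_2\cdots)=\sigma(z_1)\sigma(z_2)\cdots$. For $H\le\operatorname{Sym}(r)$, the symmetric Thompson group $V_r(H)$ is the group (under composition) of homeomorphisms of $\mathfrak{C}_r$ described by tables: two prefix codes $P=\{p_1,\dots,p_k\}$ and $Q=\{q_1,\dots,q_k\}$ of $\mathfrak{C}_r$ of the same size together with $\sigma_i,\tau_i\in H$, describing the homeomorphism $p_i\,\sigma_i(u)\mapsto q_i\,\tau_i(u)$ for all $u\in\mathfrak{C}_r$ and all $i$. *)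

theory Defs
  imports "HOL-Combinatorics.Permutations" "HOL-Algebra.Group"
begin

definition fwords :: "nat \<Rightarrow> nat list set" where
  "fwords r = {u. \<forall>a\<in>set u. a < r}"

definition cantor :: "nat \<Rightarrow> (nat \<Rightarrow> nat) set" where
  "cantor r = {z. \<forall>i. z i < r}"

definition cat :: "nat list \<Rightarrow> (nat \<Rightarrow> nat) \<Rightarrow> (nat \<Rightarrow> nat)" where
  "cat u z = (\<lambda>i. if i < length u then u ! i else z (i - length u))"

definition is_prefix :: "nat list \<Rightarrow> (nat \<Rightarrow> nat) \<Rightarrow> bool" where
  "is_prefix u z \<longleftrightarrow> (\<forall>i<length u. z i = u ! i)"

definition prefix_code :: "nat \<Rightarrow> nat list set \<Rightarrow> bool" where
  "prefix_code r S \<longleftrightarrow> finite S \<and> S \<subseteq> fwords r \<and>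
     (\<forall>z\<in>cantor r. \<exists>!s. s \<in> S \<and> is_prefix s z)"

definition symA :: "nat \<Rightarrow> (nat \<Rightarrow> nat) monoid" where
  "symA r = \<lparr>carrier = {s. s permutes {..<r}}, mult = (\<circ>), one = id\<rparr>"

(* V_r(H): homeomorphisms of C_r given by tables (P, Q, sigma_i, tau_i),
   mapping p_i sigma_i(u) to q_i tau_i(u); represented as maps on nat sequences
   that are the identity outside C_r (so that composition is the group law). *)
definition Vset :: "nat \<Rightarrow> (nat \<Rightarrow> nat) set \<Rightarrow> ((nat \<Rightarrow> nat) \<Rightarrow> (nat \<Rightarrow> nat)) set" where
  "Vset r H = {f. \<exists>(k::nat) (p::nat \<Rightarrow> nat list) (q::nat \<Rightarrow> nat list)
                   (\<sigma>::nat \<Rightarrow> nat \<Rightarrow> nat) (\<tau>::nat \<Rightarrow> nat \<Rightarrow> nat).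
       inj_on p {..<k} \<and> inj_on q {..<k} \<and>
       prefix_code r (p ` {..<k}) \<and> prefix_code r (q ` {..<k}) \<and>
       (\<forall>i<k. \<sigma> i \<in> H \<and> \<tau> i \<in> H) \<and>
       (\<forall>i<k. \<forall>u\<in>cantor r. f (cat (p i) (\<sigma> i \<circ> u)) = cat (q i) (\<tau> i \<circ> u)) \<and>
       (\<forall>z. z \<notin> cantor r \<longrightarrow> f z = z)}"

definition Vgrp :: "nat \<Rightarrow> (nat \<Rightarrow> nat) set \<Rightarrow> ((nat \<Rightarrow> nat) \<Rightarrow> (nat \<Rightarrow> nat)) monoid" where
  "Vgrp r H = \<lparr>carrier = Vset r H, mult = (\<circ>), one = id\<rparr>"

end

theory Submission
  imports Defs
begin

lemma pre_append: "is_prefix (u @ v) y \<Longrightarrow> is_prefix u y"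
  by (auto simp: is_prefix_def nth_append)

lemma pre_snoc: "is_prefix u y \<Longrightarrow> is_prefix (u @ [y (length u)]) y"
  by (auto simp: is_prefix_def nth_append less_Suc_eq)

lemma pre_snoc_iff: "is_prefix (u @ [b]) y \<longleftrightarrow> is_prefix u y \<and> y (length u) = b"
  by (auto simp: is_prefix_def nth_append less_Suc_eq)

lemma pre_cat: "is_prefix u (cat u z)"
  by (auto simp: is_prefix_def cat_def)

lemma cat_shift: "is_prefix u y \<Longrightarrow> cat u (\<lambda>i. y (i + length u)) = y"
  by (auto simp: is_prefix_def cat_def fun_eq_iff)

lemma shift_cat: "(\<lambda>i. cat u z (i + length u)) = z"
  by (auto simp: cat_def fun_eq_iff)

lemma cat_snoc: "cat (u @ [b]) z = cat u (\<lambda>i. if i = 0 then b else z (i - 1))"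
  by (auto simp: cat_def fun_eq_iff nth_append)

lemma cat_append: "cat (u @ v) z = cat u (cat v z)"
  by (auto simp: cat_def fun_eq_iff nth_append)

lemma cat_in_cantor: "u \<in> fwords r \<Longrightarrow> z \<in> cantor r \<Longrightarrow> cat u z \<in> cantor r"
  by (auto simp: cat_def cantor_def fwords_def)

lemma prefixes_same_len: "is_prefix u z \<Longrightarrow> is_prefix v z \<Longrightarrow> length u = length v \<Longrightarrow> u = v"
  by (auto simp: is_prefix_def intro: nth_equalityI)

lemma prefixes_take: "is_prefix u z \<Longrightarrow> is_prefix v z \<Longrightarrow> length u \<le> length v \<Longrightarrow> u = take (length u) v"
  by (auto simp: is_prefix_def intro!: nth_equalityI)


definition step :: "nat \<Rightarrow> (nat \<Rightarrow> nat list) \<Rightarrow> nat \<Rightarrow> nat \<Rightarrow> nat list" where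
  "step d w c j = (if c * d + j < d - 1 then w (c * d + j + 1) else w 0 @ [c * d + j - (d - 1)])"

definition T :: "nat \<Rightarrow> (nat \<Rightarrow> nat list) \<Rightarrow> nat list \<Rightarrow> nat \<Rightarrow> nat list" where
  "T d w x = foldl (step d) w x"

lemma T_Nil[simp]: "T d w [] = w" by (simp add: T_def)
lemma T_snoc: "T d w (x @ [c]) = step d (T d w x) c" by (simp add: T_def)

definition pj :: "nat \<Rightarrow> nat \<Rightarrow> nat" where
  "pj d e = (if e < d - 1 then e + 1 else 0)"

lemma step_parent: "is_prefix (step d w c j) y \<Longrightarrow> is_prefix (w (pj d (c * d + j))) y"
  by (auto simp: step_def pj_def dest: pre_append)

lemma pj_less: "0 < d \<Longrightarrow> pj d e < d" by (auto simp: pj_def)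

lemma T_parent: "0 < d \<Longrightarrow> j < d \<Longrightarrow> is_prefix (T d w (x @ x') j) y \<Longrightarrow> \<exists>j'<d. is_prefix (T d w x j') y"
proof (induction x' arbitrary: j rule: rev_induct)
  case Nil
  then show ?case by auto
next
  case (snoc c x')
  then show ?case
    using step_parent[of d "T d w (x @ x')" c j y] pj_less[of d]
    by (metis T_snoc append_assoc)
qed


definition Uq :: "nat \<Rightarrow> (nat \<Rightarrow> nat list) \<Rightarrow> bool" where
  "Uq d w \<longleftrightarrow> (\<forall>y j j'. j < d \<longrightarrow> j' < d \<longrightarrow> is_prefix (w j) y \<longrightarrow> is_prefix (w j') y \<longrightarrow> j = j')"

lemma divmod_inj: "(j::nat) < d \<Longrightarrow> j' < d \<Longrightarrow> c * d + j = c' * d + j' \<Longrightarrow> c = c' \<and> j = j'"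
proof -
  assume a: "j < d" "j' < d" "c * d + j = c' * d + j'"
  have "j = (c * d + j) mod d" using a(1) by simp
  also have "... = (c' * d + j') mod d" using a(3) by simp
  also have "... = j'" using a(2) by simp
  finally have jj: "j = j'" .
  then have "c * d = c' * d" using a by simp
  then show ?thesis using jj a by simp
qed

lemma level_uniq:
  assumes "Uq d w" "0 < d"
  shows "is_prefix (T d w x1 j1) y \<Longrightarrow> is_prefix (T d w x2 j2) y \<Longrightarrow> length x1 = length x2
     \<Longrightarrow> j1 < d \<Longrightarrow> j2 < d \<Longrightarrow> x1 = x2 \<and> j1 = j2"
proof (induction x1 arbitrary: x2 j1 j2 rule: rev_induct)
  case Nil
  then show ?case using assms(1) unfolding Uq_def by auto
next
  case (snoc c1 x1')
  obtain x2' c2 where x2: "x2 = x2' @ [c2]"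
    using snoc.prems(3) by (metis length_0_conv rev_exhaust snoc_eq_iff_butlast)
  define e1 where "e1 = c1 * d + j1"
  define e2 where "e2 = c2 * d + j2"
  have p1: "is_prefix (step d (T d w x1') c1 j1) y" using snoc.prems(1) by (simp add: T_snoc)
  have p2: "is_prefix (step d (T d w x2') c2 j2) y" using snoc.prems(2) x2 by (simp add: T_snoc)
  have q1: "is_prefix (T d w x1' (pj d e1)) y" using step_parent[OF p1] e1_def by simp
  have q2: "is_prefix (T d w x2' (pj d e2)) y" using step_parent[OF p2] e2_def by simp
  have "x1' = x2' \<and> pj d e1 = pj d e2"
    using snoc.IH[OF q1 q2] snoc.prems(3) x2 pj_less[OF assms(2)] by simp
  then have xe: "x1' = x2'" and pe: "pj d e1 = pj d e2" by auto
  have "e1 = e2"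
  proof (cases "e1 < d - 1")
    case True
    then show ?thesis using pe by (auto simp: pj_def split: if_splits)
  next
    case False
    then have F2: "\<not> e2 < d - 1" using pe by (auto simp: pj_def split: if_splits)
    have "y (length (T d w x1' 0)) = e1 - (d - 1)"
      using p1 False unfolding step_def e1_def[symmetric] by (simp add: pre_snoc_iff)
    moreover have "y (length (T d w x2' 0)) = e2 - (d - 1)"
      using p2 F2 unfolding step_def e2_def[symmetric] by (simp add: pre_snoc_iff)
    ultimately show ?thesis using xe False F2 by simp
  qed
  then have "c1 = c2 \<and> j1 = j2" using divmod_inj[OF snoc.prems(4,5)] e1_def e2_def by simp
  then show ?case using xe x2 by simp
qed

lemma level_exists:
  assumes "0 < d" "n = Suc (d * (m - 1))" "y \<in> cantor n" "\<exists>j<d. is_prefix (w j) y" "1 \<le> m"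
  shows "\<exists>x j. x \<in> fwords m \<and> length x = k \<and> j < d \<and> is_prefix (T d w x j) y"
proof (induction k)
  case 0
  then show ?case using assms(4) by (auto simp: fwords_def)
next
  case (Suc k)
  then obtain x j where xj: "x \<in> fwords m" "length x = k" "j < d" "is_prefix (T d w x j) y" by blast
  show ?case
  proof (cases "j = 0")
    case False
    have "0 * d + (j - 1) < d - 1" using False xj(3) by arith
    then have "step d (T d w x) 0 (j - 1) = T d w x j" using False by (simp add: step_def)
    moreover have "m > 0" using assms(5) by simp
    ultimately show ?thesis using xj False
      by (intro exI[of _ "x @ [0]"] exI[of _ "j - 1"]) (auto simp: T_snoc fwords_def)
  next
    case True
    define b where "b = y (length (T d w x 0))"
    have bn: "b < n" using assms(3) by (simp add: cantor_def b_def)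
    define e where "e = b + (d - 1)"
    have "d * m = d * (m - 1) + d" using assms(5)
      by (metis add.commute le_add_diff_inverse mult_Suc_right plus_1_eq_Suc)
    then have "e < m * d" using bn assms(1,2) e_def by (simp add: mult.commute)
    then have cm: "e div d < m" using assms(1) by (simp add: div_less_iff_less_mult)
    have ee: "(e div d) * d + e mod d = e" by simp
    have "step d (T d w x) (e div d) (e mod d) = T d w x 0 @ [b]"
      unfolding step_def ee using e_def by simp
    then show ?thesis using xj True cm pre_snoc[of "T d w x 0" y] assms(1)
      by (intro exI[of _ "x @ [e div d]"] exI[of _ "e mod d"]) (auto simp: T_snoc fwords_def b_def)
  qed
qed


locale E =
  fixes m n d :: nat and G :: "(nat \<Rightarrow> nat) set" and ix :: "(nat \<Rightarrow> nat) \<Rightarrow> nat"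
  assumes m2: "2 \<le> m" and nd: "n = Suc (d * (m - 1))" and d0: "0 < d"
    and sub: "subgroup G (symA m)"
    and ixb: "bij_betw ix G {..<card G}"
begin

definition lev :: "(nat \<Rightarrow> nat list) \<Rightarrow> (nat \<Rightarrow> nat) \<Rightarrow> nat \<Rightarrow> nat list" where
  "lev w y k = (SOME x. \<exists>j<d. x \<in> fwords m \<and> length x = k \<and> is_prefix (T d w x j) y)"

definition path :: "(nat \<Rightarrow> nat list) \<Rightarrow> (nat \<Rightarrow> nat) \<Rightarrow> nat \<Rightarrow> nat" where
  "path w y i = lev w y (Suc i) ! i"

definition ok :: "(nat \<Rightarrow> nat list) \<Rightarrow> (nat \<Rightarrow> nat) \<Rightarrow> bool" where
  "ok w y \<longleftrightarrow> y \<in> cantor n \<and> (\<exists>j<d. is_prefix (w j) y) \<and> Uq d w"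

lemma m1: "1 \<le> m" using m2 by simp

lemma lev_prop: "ok w y \<Longrightarrow> \<exists>j<d. lev w y k \<in> fwords m \<and> length (lev w y k) = k \<and> is_prefix (T d w (lev w y k) j) y"
  unfolding lev_def ok_def
  using level_exists[OF d0 nd _ _ m1, of y w k]
  by (smt (verit, best) someI_ex)

lemma cover_lev: "ok w y \<Longrightarrow> j < d \<Longrightarrow> is_prefix (T d w x j) y \<Longrightarrow> x = lev w y (length x)"
  using lev_prop[of w y "length x"] level_uniq[OF _ d0, of w x j y] unfolding ok_def by metis

lemma lev_take: "ok w y \<Longrightarrow> k \<le> k' \<Longrightarrow> lev w y k = take k (lev w y k')"
proof -
  assume a: "ok w y" "k \<le> k'"
  obtain j where j: "j < d" "is_prefix (T d w (lev w y k') j) y" "length (lev w y k') = k'"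
    using lev_prop[OF a(1)] by blast
  have "lev w y k' = take k (lev w y k') @ drop k (lev w y k')" by simp
  then obtain j' where "j' < d" "is_prefix (T d w (take k (lev w y k')) j') y"
    using T_parent[OF d0 j(1), of w "take k (lev w y k')" "drop k (lev w y k')" y] j(2) by metis
  then have "take k (lev w y k') = lev w y (length (take k (lev w y k')))"
    using cover_lev[OF a(1)] by blast
  then show ?thesis using a(2) j(3) by simp
qed

lemma path_prefix: "ok w y \<Longrightarrow> is_prefix (lev w y k) (path w y)"
proof -
  assume a: "ok w y"
  have "\<And>i. i < k \<Longrightarrow> path w y i = lev w y k ! i"
  proof -
    fix i assume i: "i < k"
    have "lev w y (Suc i) = take (Suc i) (lev w y k)" using lev_take[OF a, of "Suc i" k] i by simp
    then show "path w y i = lev w y k ! i" unfolding path_def by simp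
  qed
  moreover have "length (lev w y k) = k" using lev_prop[OF a] by blast
  ultimately show ?thesis unfolding is_prefix_def by simp
qed

lemma path_cantor: "ok w y \<Longrightarrow> path w y \<in> cantor m"
proof -
  assume a: "ok w y"
  have "\<And>i. path w y i < m"
  proof -
    fix i
    obtain j where "lev w y (Suc i) \<in> fwords m" "length (lev w y (Suc i)) = Suc i"
      using lev_prop[OF a] by blast
    then show "path w y i < m" unfolding path_def fwords_def by simp
  qed
  then show ?thesis by (simp add: cantor_def)
qed

lemma cover_iff: "ok w y \<Longrightarrow> x \<in> fwords m \<Longrightarrow> (\<exists>j<d. is_prefix (T d w x j) y) \<longleftrightarrow> is_prefix x (path w y)"
proof
  assume a: "ok w y" "x \<in> fwords m" "\<exists>j<d. is_prefix (T d w x j) y"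
  then have "x = lev w y (length x)" using cover_lev by blast
  then show "is_prefix x (path w y)" using path_prefix[OF a(1)] by metis
next
  assume a: "ok w y" "x \<in> fwords m" "is_prefix x (path w y)"
  have "x = lev w y (length x)"
    using prefixes_same_len[OF a(3) path_prefix[OF a(1)]] lev_prop[OF a(1)] by metis
  then show "\<exists>j<d. is_prefix (T d w x j) y" using lev_prop[OF a(1), of "length x"] by metis
qed

end

abbreviation iv :: "(nat \<Rightarrow> nat) \<Rightarrow> nat \<Rightarrow> nat" where "iv g \<equiv> inv_into UNIV g"

definition root :: "nat \<Rightarrow> nat list" where "root i = replicate i 0 @ [1]"

lemma pre_rep: "is_prefix (replicate i 0 @ [b]) z \<longleftrightarrow> (\<forall>l<i. z l = 0) \<and> z i = b"
  by (auto simp: is_prefix_def nth_append less_Suc_eq)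

lemma pre_rep0: "is_prefix (replicate i 0) z \<longleftrightarrow> (\<forall>l<i. z l = 0)"
  by (auto simp: is_prefix_def)

lemma root_uniq: "is_prefix (root i) z \<Longrightarrow> is_prefix (root i') z \<Longrightarrow> i = i'"
  unfolding root_def pre_rep by (metis linorder_neqE_nat zero_neq_one)

context E begin

lemma G_perm: "g \<in> G \<Longrightarrow> g permutes {..<m}"
  using subgroup.subset[OF sub] by (auto simp: symA_def)

lemma G_id: "id \<in> G"
  using subgroup.one_closed[OF sub] by (simp add: symA_def)

lemma G_comp: "g \<in> G \<Longrightarrow> h \<in> G \<Longrightarrow> g \<circ> h \<in> G"
  using subgroup.m_closed[OF sub, of g h] by (simp add: symA_def)

lemma G_inv: "g \<in> G \<Longrightarrow> iv g \<in> G"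
proof -
  assume g: "g \<in> G"
  have p: "g permutes {..<m}" using G_perm[OF g] .
  have "m_inv (symA m) g = iv g"
    unfolding m_inv_def
  proof (rule the_equality)
    show "iv g \<in> carrier (symA m) \<and> g \<otimes>\<^bsub>symA m\<^esub> iv g = \<one>\<^bsub>symA m\<^esub> \<and> iv g \<otimes>\<^bsub>symA m\<^esub> g = \<one>\<^bsub>symA m\<^esub>"
      using p by (simp add: symA_def permutes_inv permutes_inv_o)
  next
    fix y assume "y \<in> carrier (symA m) \<and> g \<otimes>\<^bsub>symA m\<^esub> y = \<one>\<^bsub>symA m\<^esub> \<and> y \<otimes>\<^bsub>symA m\<^esub> g = \<one>\<^bsub>symA m\<^esub>"
    then have "g \<circ> y = id" "y \<circ> g = id" by (auto simp: symA_def)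
    then show "y = iv g"
      by (metis comp_assoc id_comp p permutes_inv_o(1) comp_id)
  qed
  then show ?thesis using subgroup.m_inv_closed[OF sub g] by simp
qed

lemma G_bij: "g \<in> G \<Longrightarrow> bij g" using G_perm permutes_bij by blast
lemma G_inv_o: "g \<in> G \<Longrightarrow> g \<circ> iv g = id" "g \<in> G \<Longrightarrow> iv g \<circ> g = id"
  using G_perm permutes_inv_o by blast+
lemma G_inv_app: "g \<in> G \<Longrightarrow> g (iv g c) = c" "g \<in> G \<Longrightarrow> iv g (g c) = c"
  using G_inv_o by (metis comp_apply id_apply)+
lemma G_lt: "g \<in> G \<Longrightarrow> c < m \<Longrightarrow> g c < m"
  using G_perm permutes_in_image by fastforce
lemma G_cantor: "g \<in> G \<Longrightarrow> u \<in> cantor m \<Longrightarrow> g \<circ> u \<in> cantor m"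
  using G_lt by (auto simp: cantor_def)
lemma G_fwords: "g \<in> G \<Longrightarrow> x \<in> fwords m \<Longrightarrow> map g x \<in> fwords m"
  using G_lt by (auto simp: fwords_def)

definition wr :: "(nat \<Rightarrow> nat) \<Rightarrow> nat \<Rightarrow> nat list" where
  "wr g j = root (ix g * d + j)"

definition Reg :: "(nat \<Rightarrow> nat) \<Rightarrow> nat list \<Rightarrow> nat \<Rightarrow> nat list" where
  "Reg g x = T d (wr g) (map g x)"

definition apath :: "(nat \<Rightarrow> nat) \<Rightarrow> (nat \<Rightarrow> nat) \<Rightarrow> nat \<Rightarrow> nat" where
  "apath g y = iv g \<circ> path (wr g) y"

definition okg :: "(nat \<Rightarrow> nat) \<Rightarrow> (nat \<Rightarrow> nat) \<Rightarrow> bool" where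
  "okg g y \<longleftrightarrow> g \<in> G \<and> y \<in> cantor n \<and> (\<exists>j<d. is_prefix (wr g j) y)"

lemma ix_inj: "g1 \<in> G \<Longrightarrow> g2 \<in> G \<Longrightarrow> ix g1 = ix g2 \<Longrightarrow> g1 = g2"
  using ixb by (auto simp: bij_betw_def inj_on_def)

lemma copy_uniq: "g1 \<in> G \<Longrightarrow> g2 \<in> G \<Longrightarrow> j1 < d \<Longrightarrow> j2 < d \<Longrightarrow>
   is_prefix (wr g1 j1) z \<Longrightarrow> is_prefix (wr g2 j2) z \<Longrightarrow> g1 = g2 \<and> j1 = j2"
proof -
  assume a: "g1 \<in> G" "g2 \<in> G" "j1 < d" "j2 < d" "is_prefix (wr g1 j1) z" "is_prefix (wr g2 j2) z"
  have "ix g1 * d + j1 = ix g2 * d + j2" using root_uniq a(5,6) unfolding wr_def by blast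
  then have "ix g1 = ix g2 \<and> j1 = j2" using divmod_inj[OF a(3,4)] by blast
  then show ?thesis using ix_inj a by blast
qed

lemma Uq_wr: "g \<in> G \<Longrightarrow> Uq d (wr g)"
  unfolding Uq_def using copy_uniq by blast

lemma okg_ok: "okg g y \<Longrightarrow> ok (wr g) y"
  unfolding okg_def ok_def using Uq_wr by blast

lemma map_prefix: "g \<in> G \<Longrightarrow> is_prefix (map g x) P \<longleftrightarrow> is_prefix x (iv g \<circ> P)"
proof -
  assume g: "g \<in> G"
  have "\<forall>i. (P i = g (x ! i)) = (iv g (P i) = x ! i)" using G_inv_app[OF g] by metis
  then show ?thesis by (simp add: is_prefix_def)
qed

lemma apath_cantor: "okg g y \<Longrightarrow> apath g y \<in> cantor m"
  unfolding apath_def using path_cantor[OF okg_ok] G_cantor G_inv okg_def by metis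

lemma Reg_cover: "okg g y \<Longrightarrow> x \<in> fwords m \<Longrightarrow> (\<exists>j<d. is_prefix (Reg g x j) y) \<longleftrightarrow> is_prefix x (apath g y)"
  unfolding Reg_def apath_def
  using cover_iff[OF okg_ok, of g y "map g x"] G_fwords map_prefix okg_def by metis

lemma Reg_root: "g \<in> G \<Longrightarrow> j < d \<Longrightarrow> is_prefix (Reg g x j) y \<Longrightarrow> \<exists>j'<d. is_prefix (wr g j') y"
  unfolding Reg_def using T_parent[OF d0, of j "wr g" "[]" "map g x" y] by simp

lemma Reg_okg: "g \<in> G \<Longrightarrow> j < d \<Longrightarrow> y \<in> cantor n \<Longrightarrow> is_prefix (Reg g x j) y \<Longrightarrow> okg g y"
  using Reg_root okg_def by blast

lemma step_fwords: "(\<forall>j<d. w j \<in> fwords n) \<Longrightarrow> c < m \<Longrightarrow> j < d \<Longrightarrow> step d w c j \<in> fwords n"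
proof -
  assume a: "\<forall>j<d. w j \<in> fwords n" "c < m" "j < d"
  have "c * d \<le> (m - 1) * d" using a(2) by (intro mult_le_mono1) simp
  then have "c * d + j - (d - 1) \<le> (m - 1) * d" using a(3) by arith
  then have "c * d + j - (d - 1) < n" using nd by (simp add: mult.commute)
  show ?thesis
  proof (cases "c * d + j < d - 1")
    case True
    then have "c * d + j + 1 < d" by arith
    then show ?thesis using a True by (simp add: step_def)
  next
    case False
    then show ?thesis using a \<open>c * d + j - (d - 1) < n\<close> by (auto simp: step_def fwords_def)
  qed
qed

lemma T_fwords: "(\<forall>j<d. w j \<in> fwords n) \<Longrightarrow> x \<in> fwords m \<Longrightarrow> j < d \<Longrightarrow> T d w x j \<in> fwords n"
proof (induction x arbitrary: j rule: rev_induct)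
  case Nil then show ?case by simp
next
  case (snoc c x)
  have "\<forall>j<d. T d w x j \<in> fwords n" using snoc by (simp add: fwords_def)
  then show ?case using step_fwords[of "T d w x" c j] snoc.prems by (simp add: T_snoc fwords_def)
qed

lemma n2: "2 \<le> n" using nd m2 d0 by (simp add: Suc_le_eq)

lemma wr_fwords: "wr g j \<in> fwords n"
  using n2 by (auto simp: wr_def root_def fwords_def)

lemma Reg_fwords: "g \<in> G \<Longrightarrow> x \<in> fwords m \<Longrightarrow> j < d \<Longrightarrow> Reg g x j \<in> fwords n"
  unfolding Reg_def using T_fwords wr_fwords G_fwords by blast

end

definition jT :: "nat \<Rightarrow> (nat \<Rightarrow> nat list) \<Rightarrow> nat list \<Rightarrow> (nat \<Rightarrow> nat) \<Rightarrow> nat" where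
  "jT d w x y = (THE j. j < d \<and> is_prefix (T d w x j) y)"

definition tvT :: "nat \<Rightarrow> (nat \<Rightarrow> nat list) \<Rightarrow> nat list \<Rightarrow> (nat \<Rightarrow> nat list) \<Rightarrow> nat list \<Rightarrow> (nat \<Rightarrow> nat) \<Rightarrow> (nat \<Rightarrow> nat)" where
  "tvT d w x w' x' y = cat (T d w' x' (jT d w x y)) (\<lambda>i. y (i + length (T d w x (jT d w x y))))"

lemma jT_eq: "Uq d w \<Longrightarrow> 0 < d \<Longrightarrow> j < d \<Longrightarrow> is_prefix (T d w x j) y \<Longrightarrow> jT d w x y = j"
  unfolding jT_def by (rule the_equality) (use level_uniq in blast)+

lemma ST: assumes "Uq d w" "0 < d" "j < d" "is_prefix (T d w (X @ [c]) j) y"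
  shows "tvT d w (X @ [c]) w' (X' @ [c]) y = tvT d w X w' X' y"
proof -
  have j1: "jT d w (X @ [c]) y = j" using jT_eq[OF assms] .
  define e where "e = c * d + j"
  show ?thesis
  proof (cases "e < d - 1")
    case True
    then have e1: "e + 1 < d" by arith
    have s1: "T d w (X @ [c]) j = T d w X (e + 1)" using True by (simp add: T_snoc step_def e_def)
    have s2: "T d w' (X' @ [c]) j = T d w' X' (e + 1)" using True by (simp add: T_snoc step_def e_def)
    have j2: "jT d w X y = e + 1" using jT_eq[OF assms(1,2) e1] assms(4) s1 by simp
    show ?thesis unfolding tvT_def j1 j2 s1 s2 by simp
  next
    case False
    define b where "b = e - (d - 1)"
    have s1: "T d w (X @ [c]) j = T d w X 0 @ [b]" using False by (simp add: T_snoc step_def e_def b_def)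
    have s2: "T d w' (X' @ [c]) j = T d w' X' 0 @ [b]" using False by (simp add: T_snoc step_def e_def b_def)
    have p: "is_prefix (T d w X 0) y" "y (length (T d w X 0)) = b" using assms(4) s1 by (auto simp: pre_snoc_iff)
    have j2: "jT d w X y = 0" using jT_eq[OF assms(1,2) _ p(1)] assms(2) by simp
    have "(\<lambda>i. if i = 0 then b else y (i - 1 + length (T d w X 0 @ [b]))) = (\<lambda>i. y (i + length (T d w X 0)))"
      using p(2) by (auto simp: fun_eq_iff)
    then show ?thesis unfolding tvT_def j1 j2 s1 s2 cat_snoc by simp
  qed
qed

lemma EXT_T: assumes "Uq d w" "0 < d"
  shows "j < d \<Longrightarrow> is_prefix (T d w (x @ s) j) y \<Longrightarrow> tvT d w (x @ s) w' (x' @ s) y = tvT d w x w' x' y"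
proof (induction s arbitrary: j rule: rev_induct)
  case Nil then show ?case by simp
next
  case (snoc c s)
  have "tvT d w (x @ s @ [c]) w' (x' @ s @ [c]) y = tvT d w (x @ s) w' (x' @ s) y"
    using ST[OF assms snoc.prems(1), of "x @ s" c y w' "x' @ s"] snoc.prems(2) by simp
  moreover obtain j' where "j' < d" "is_prefix (T d w (x @ s) j') y"
    using T_parent[OF assms(2) snoc.prems(1), of w "x @ s" "[c]" y] snoc.prems(2) by auto
  ultimately show ?case using snoc.IH by simp
qed

context E begin

definition N :: nat where "N = card G * d"

definition Cset :: "nat list set" where
  "Cset = {replicate i 0 @ [b] | i b. i < N \<and> 2 \<le> b \<and> b < n} \<union> {replicate N 0}"

definition inW :: "(nat \<Rightarrow> nat) \<Rightarrow> bool" where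
  "inW y \<longleftrightarrow> (\<exists>g\<in>G. \<exists>j<d. is_prefix (wr g j) y)"

lemma finG: "finite G"
proof -
  have "G \<subseteq> {s. s permutes {..<m}}" using G_perm by blast
  moreover have "finite {s. s permutes {..<m}}" by (rule finite_permutations) simp
  ultimately show ?thesis by (rule finite_subset)
qed

lemma inW_iff: "inW y \<longleftrightarrow> (\<exists>i<N. is_prefix (root i) y)"
proof
  assume "inW y"
  then obtain g j where "g \<in> G" "j < d" "is_prefix (wr g j) y" unfolding inW_def by blast
  moreover have "ix g < card G" using ixb \<open>g \<in> G\<close> by (auto simp: bij_betw_def)
  moreover have "ix g * d + j < N"
  proof -
    have "ix g * d + j < ix g * d + d" using \<open>j < d\<close> by simp
    also have "... = Suc (ix g) * d" by simp
    also have "... \<le> card G * d" using \<open>ix g < card G\<close> by (intro mult_le_mono1) simp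
    finally show ?thesis by (simp add: N_def)
  qed
  ultimately show "\<exists>i<N. is_prefix (root i) y" unfolding wr_def by blast
next
  assume "\<exists>i<N. is_prefix (root i) y"
  then obtain i where i: "i < N" "is_prefix (root i) y" by blast
  have "i div d < card G" using i(1) d0 by (simp add: N_def div_less_iff_less_mult)
  then obtain g where g: "g \<in> G" "ix g = i div d" using ixb by (metis bij_betw_iff_bijections lessThan_iff)
  have "ix g * d + i mod d = i" using g by simp
  then have "is_prefix (wr g (i mod d)) y" using i by (simp add: wr_def)
  then show "inW y" using g d0 unfolding inW_def by (intro bexI[of _ g] exI[of _ "i mod d"]) auto
qed

lemma CB2: "z \<in> cantor n \<Longrightarrow> (\<exists>i<N. is_prefix (root i) z) \<or> (\<exists>c\<in>Cset. is_prefix c z)"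
proof (cases "\<forall>l<N. z l = 0")
  case True
  then show ?thesis by (auto simp: Cset_def pre_rep0)
next
  case False
  assume zc: "z \<in> cantor n"
  define i where "i = (LEAST l. z l \<noteq> 0)"
  have iz: "z i \<noteq> 0" using False unfolding i_def by (metis (mono_tags, lifting) LeastI)
  have il: "\<forall>l<i. z l = 0" unfolding i_def using not_less_Least by blast
  have iN: "i < N" using False il by (meson linorder_not_le order_less_le_trans)
  have zn: "z i < n" using zc by (simp add: cantor_def)
  show ?thesis
  proof (cases "z i = 1")
    case True
    then show ?thesis using il iN by (auto simp: root_def pre_rep)
  next
    case False
    then have "replicate i 0 @ [z i] \<in> Cset" using iz zn iN by (auto simp: Cset_def)
    moreover have "is_prefix (replicate i 0 @ [z i]) z" using il pre_rep by blast
    ultimately show ?thesis by blast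
  qed
qed

lemma CB3: "i < N \<Longrightarrow> is_prefix (root i) z \<Longrightarrow> c \<in> Cset \<Longrightarrow> \<not> is_prefix c z"
proof
  assume a: "i < N" "is_prefix (root i) z" "c \<in> Cset" "is_prefix c z"
  have r: "\<forall>l<i. z l = 0" "z i = 1" using a(2) by (auto simp: root_def pre_rep)
  show False
  proof (cases "c = replicate N 0")
    case True
    then show ?thesis using a(1,4) r by (auto simp: pre_rep0)
  next
    case False
    then obtain i' b where c: "c = replicate i' 0 @ [b]" "2 \<le> b" using a(3) by (auto simp: Cset_def)
    have "\<forall>l<i'. z l = 0" "z i' = b" using a(4) c by (auto simp: pre_rep)
    then show ?thesis using r c(2) by (cases "i' < i"; cases "i < i'") auto
  qed
qed

lemma CB4: "c1 \<in> Cset \<Longrightarrow> c2 \<in> Cset \<Longrightarrow> is_prefix c1 z \<Longrightarrow> is_prefix c2 z \<Longrightarrow> c1 = c2"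
proof -
  have A: "c = replicate N 0 \<or> (\<exists>i b. c = replicate i 0 @ [b] \<and> i < N \<and> 2 \<le> b)" if "c \<in> Cset" for c
    using that by (auto simp: Cset_def)
  assume a: "c1 \<in> Cset" "c2 \<in> Cset" "is_prefix c1 z" "is_prefix c2 z"
  have B: "\<not> is_prefix (replicate N 0) z" if "is_prefix (replicate i 0 @ [b]) z" "i < N" "2 \<le> b" for i b
    using that by (auto simp: pre_rep pre_rep0)
  have C: "replicate i 0 @ [b] = replicate i' 0 @ [b']" if "is_prefix (replicate i 0 @ [b]) z"
     "is_prefix (replicate i' 0 @ [b']) z" "2 \<le> b" "2 \<le> b'" for i b i' b'
  proof -
    have "\<forall>l<i. z l = 0" "z i = b" "\<forall>l<i'. z l = 0" "z i' = b'" using that by (auto simp: pre_rep)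
    then have "i = i'" using that(3,4) by (metis linorder_neqE_nat not_numeral_le_zero)
    then show ?thesis using \<open>z i = b\<close> \<open>z i' = b'\<close> by simp
  qed
  show ?thesis
  proof (cases "c1 = replicate N 0")
    case True
    then show ?thesis using A[OF a(2)] a(3,4) B by blast
  next
    case F1: False
    then obtain i b where c1: "c1 = replicate i 0 @ [b]" "i < N" "2 \<le> b" using A[OF a(1)] by blast
    show ?thesis
    proof (cases "c2 = replicate N 0")
      case True
      then show ?thesis using c1 a(3,4) B by blast
    next
      case False
      then obtain i' b' where "c2 = replicate i' 0 @ [b']" "i' < N" "2 \<le> b'" using A[OF a(2)] by blast
      then show ?thesis using c1 a(3,4) C by blast
    qed
  qed
qed

lemma Cset_fwords: "Cset \<subseteq> fwords n"
  using n2 by (auto simp: Cset_def fwords_def)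

lemma Cset_finite: "finite Cset"
proof -
  have "{replicate i 0 @ [b] | i b. i < N \<and> 2 \<le> b \<and> b < n} \<subseteq> (\<lambda>(i,b). replicate i 0 @ [b]) ` ({..<N} \<times> {..<n})"
    by auto
  moreover have "finite ((\<lambda>(i,b). replicate i 0 @ [b]) ` ({..<N} \<times> {..<n}))" by simp
  ultimately have "finite {replicate i 0 @ [b] | i b. i < N \<and> 2 \<le> b \<and> b < n}" by (rule finite_subset)
  then show ?thesis unfolding Cset_def by simp
qed

end

lemma comp_cat: "g \<circ> cat r u = cat (map g r) (g \<circ> u)"
  by (auto simp: cat_def fun_eq_iff)

context E begin

definition piece :: "((nat \<Rightarrow> nat) \<Rightarrow> (nat \<Rightarrow> nat)) \<Rightarrow> nat list \<Rightarrow> (nat \<Rightarrow> nat) \<Rightarrow> nat list \<Rightarrow> (nat \<Rightarrow> nat) \<Rightarrow> bool" where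
  "piece f a \<sigma> b \<tau> \<longleftrightarrow> \<sigma> \<in> G \<and> \<tau> \<in> G \<and> a \<in> fwords m \<and> b \<in> fwords m \<and>
     (\<forall>u\<in>cantor m. f (cat a (\<sigma> \<circ> u)) = cat b (\<tau> \<circ> u))"

definition val :: "(nat \<Rightarrow> nat) \<Rightarrow> nat list \<Rightarrow> (nat \<Rightarrow> nat) \<Rightarrow> nat list \<Rightarrow> (nat \<Rightarrow> nat) \<Rightarrow> (nat \<Rightarrow> nat)" where
  "val g a h b y = tvT d (wr g) (map g a) (wr h) (map h b) y"

definition cp :: "(nat \<Rightarrow> nat) \<Rightarrow> (nat \<Rightarrow> nat)" where
  "cp y = (THE g. g \<in> G \<and> (\<exists>j<d. is_prefix (wr g j) y))"

definition Phi :: "((nat \<Rightarrow> nat) \<Rightarrow> (nat \<Rightarrow> nat)) \<Rightarrow> (nat \<Rightarrow> nat) \<Rightarrow> (nat \<Rightarrow> nat)" where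
  "Phi f y = (if y \<in> cantor n \<and> inW y then
      (SOME v. \<exists>a \<sigma> b \<tau>. piece f a \<sigma> b \<tau> \<and> is_prefix a (apath (cp y) y) \<and> v = val (cp y) a (cp y \<circ> \<sigma> \<circ> iv \<tau>) b y)
     else y)"

lemma cp_eq: "okg g y \<Longrightarrow> cp y = g"
  unfolding cp_def okg_def by (rule the_equality) (use copy_uniq in blast)+

lemma okg_inW: "okg g y \<Longrightarrow> inW y \<and> y \<in> cantor n"
  unfolding okg_def inW_def by blast

lemma iv_comp: "g \<in> G \<Longrightarrow> h \<in> G \<Longrightarrow> iv (g \<circ> iv h) = h \<circ> iv g"
  using G_bij by (simp add: o_inv_distrib bij_imp_bij_inv inv_inv_eq)

lemma iv_comp2: "g \<in> G \<Longrightarrow> h \<in> G \<Longrightarrow> iv (g \<circ> h) = iv h \<circ> iv g"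
  using G_bij by (simp add: o_inv_distrib)

lemma PEXT: assumes "piece f a \<sigma> b \<tau>" "r \<in> fwords m"
  shows "piece f (a @ r) \<sigma> (b @ map (\<tau> \<circ> iv \<sigma>) r) \<tau>"
proof -
  have s: "\<sigma> \<in> G" "\<tau> \<in> G" using assms(1) by (auto simp: piece_def)
  have fw: "a @ r \<in> fwords m" "b @ map (\<tau> \<circ> iv \<sigma>) r \<in> fwords m"
    using assms G_lt G_inv s by (auto simp: piece_def fwords_def)
  have "f (cat (a @ r) (\<sigma> \<circ> u)) = cat (b @ map (\<tau> \<circ> iv \<sigma>) r) (\<tau> \<circ> u)" if u: "u \<in> cantor m" for u
  proof -
    have mr: "map (iv \<sigma>) r \<in> fwords m" using G_fwords G_inv s assms(2) by blast
    have cu: "cat (map (iv \<sigma>) r) u \<in> cantor m" using cat_in_cantor[OF mr u] .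
    have "cat (a @ r) (\<sigma> \<circ> u) = cat a (\<sigma> \<circ> cat (map (iv \<sigma>) r) u)"
      unfolding comp_cat cat_append using G_inv_o(1)[OF s(1)] by (simp add: comp_assoc)
    then have "f (cat (a @ r) (\<sigma> \<circ> u)) = cat b (\<tau> \<circ> cat (map (iv \<sigma>) r) u)"
      using assms(1) cu by (simp add: piece_def)
    also have "... = cat (b @ map (\<tau> \<circ> iv \<sigma>) r) (\<tau> \<circ> u)"
      unfolding comp_cat cat_append by simp
    finally show ?thesis .
  qed
  then show ?thesis using s fw by (simp add: piece_def)
qed

lemma val_EXT: assumes "okg g y" "\<sigma> \<in> G" "\<tau> \<in> G" "a \<in> fwords m" "r \<in> fwords m"
    "is_prefix (a @ r) (apath g y)"
  shows "val g (a @ r) (g \<circ> \<sigma> \<circ> iv \<tau>) (b @ map (\<tau> \<circ> iv \<sigma>) r) y = val g a (g \<circ> \<sigma> \<circ> iv \<tau>) b y"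
proof -
  have gG: "g \<in> G" using assms(1) okg_def by blast
  have "(g \<circ> \<sigma> \<circ> iv \<tau>) \<circ> (\<tau> \<circ> iv \<sigma>) = g \<circ> \<sigma> \<circ> (iv \<tau> \<circ> \<tau>) \<circ> iv \<sigma>"
    by (simp add: comp_assoc)
  also have "... = g" using G_inv_o[OF assms(2)] G_inv_o[OF assms(3)] by (simp add: comp_assoc)
  finally have "(g \<circ> \<sigma> \<circ> iv \<tau>) \<circ> (\<tau> \<circ> iv \<sigma>) = g" .
  then have mm: "map (g \<circ> \<sigma> \<circ> iv \<tau>) (b @ map (\<tau> \<circ> iv \<sigma>) r) = map (g \<circ> \<sigma> \<circ> iv \<tau>) b @ map g r"
    by simp
  have ar: "a @ r \<in> fwords m" using assms(4,5) by (auto simp: fwords_def)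
  obtain j where j: "j < d" "is_prefix (Reg g (a @ r) j) y" using Reg_cover[OF assms(1) ar] assms(6) by blast
  show ?thesis unfolding val_def mm
    using EXT_T[OF Uq_wr[OF gG] d0 j(1), of "map g a" "map g r" y "wr (g \<circ> \<sigma> \<circ> iv \<tau>)" "map (g \<circ> \<sigma> \<circ> iv \<tau>) b"]
      j(2) by (simp add: Reg_def)
qed

lemma CATEQ: assumes "\<rho>1 \<in> G" "\<rho>2 \<in> G" "\<forall>v\<in>cantor m. cat b1 (\<rho>1 \<circ> v) = cat b2 (\<rho>2 \<circ> v)"
  shows "b1 = b2 \<and> \<rho>1 = \<rho>2"
proof -
  have cc: "(\<lambda>_. c) \<in> cantor m" if "c < m" for c using that by (simp add: cantor_def)
  have eq: "cat b1 (\<lambda>_. \<rho>1 c) = cat b2 (\<lambda>_. \<rho>2 c)" if "c < m" for c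
    using assms(3) cc[OF that] by (simp add: comp_def)
  have m01: "0 < m" "1 < m" using m2 by auto
  have inj1: "\<rho>1 0 \<noteq> \<rho>1 1" "\<rho>2 0 \<noteq> \<rho>2 1"
    using G_bij[OF assms(1)] G_bij[OF assms(2)] by (metis bij_def inj_eq zero_neq_one)+
  have len: "length b1 = length b2"
  proof (rule ccontr)
    assume "length b1 \<noteq> length b2"
    then consider "length b1 < length b2" | "length b2 < length b1" by linarith
    then show False
    proof cases
      case 1
      have "cat b1 (\<lambda>_. \<rho>1 0) (length b1) = cat b2 (\<lambda>_. \<rho>2 0) (length b1)" using eq m01 by simp
      moreover have "cat b1 (\<lambda>_. \<rho>1 1) (length b1) = cat b2 (\<lambda>_. \<rho>2 1) (length b1)" using eq m01 by simp
      ultimately show False using 1 inj1 by (simp add: cat_def)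
    next
      case 2
      have "cat b1 (\<lambda>_. \<rho>1 0) (length b2) = cat b2 (\<lambda>_. \<rho>2 0) (length b2)" using eq m01 by simp
      moreover have "cat b1 (\<lambda>_. \<rho>1 1) (length b2) = cat b2 (\<lambda>_. \<rho>2 1) (length b2)" using eq m01 by simp
      ultimately show False using 2 inj1 by (simp add: cat_def)
    qed
  qed
  have "b1 ! i = b2 ! i" if "i < length b1" for i
    using fun_cong[OF eq[OF m01(1)], of i] that len by (simp add: cat_def)
  then have b: "b1 = b2" using len by (simp add: nth_equalityI)
  have "\<rho>1 c = \<rho>2 c" for c
  proof (cases "c < m")
    case True
    then show ?thesis using fun_cong[OF eq[OF True], of "length b1"] len by (simp add: cat_def)
  next
    case False
    then show ?thesis using G_perm[OF assms(1)] G_perm[OF assms(2)] by (simp add: permutes_def)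
  qed
  then show ?thesis using b by auto
qed

lemma SN: assumes "piece f a \<sigma>1 b1 \<tau>1" "piece f a \<sigma>2 b2 \<tau>2"
  shows "b1 = b2 \<and> \<sigma>1 \<circ> iv \<tau>1 = \<sigma>2 \<circ> iv \<tau>2"
proof -
  have s: "\<sigma>1 \<in> G" "\<tau>1 \<in> G" "\<sigma>2 \<in> G" "\<tau>2 \<in> G" using assms by (auto simp: piece_def)
  have "f (cat a v) = cat b1 ((\<tau>1 \<circ> iv \<sigma>1) \<circ> v) \<and> f (cat a v) = cat b2 ((\<tau>2 \<circ> iv \<sigma>2) \<circ> v)"
    if v: "v \<in> cantor m" for v
  proof -
    have u1: "iv \<sigma>1 \<circ> v \<in> cantor m" "iv \<sigma>2 \<circ> v \<in> cantor m" using G_cantor G_inv s v by blast+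
    have "\<sigma>1 \<circ> (iv \<sigma>1 \<circ> v) = v" "\<sigma>2 \<circ> (iv \<sigma>2 \<circ> v) = v"
      using G_inv_o s by (metis comp_assoc id_comp)+
    then show ?thesis using assms u1 unfolding piece_def by (metis comp_assoc)
  qed
  then have "\<forall>v\<in>cantor m. cat b1 ((\<tau>1 \<circ> iv \<sigma>1) \<circ> v) = cat b2 ((\<tau>2 \<circ> iv \<sigma>2) \<circ> v)" by metis
  moreover have "\<tau>1 \<circ> iv \<sigma>1 \<in> G" "\<tau>2 \<circ> iv \<sigma>2 \<in> G" using G_comp G_inv s by blast+
  ultimately have r: "b1 = b2 \<and> \<tau>1 \<circ> iv \<sigma>1 = \<tau>2 \<circ> iv \<sigma>2"
    using CATEQ by blast
  then have "iv (\<tau>1 \<circ> iv \<sigma>1) = iv (\<tau>2 \<circ> iv \<sigma>2)" by simp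
  moreover have "iv (\<tau>1 \<circ> iv \<sigma>1) = \<sigma>1 \<circ> iv \<tau>1" "iv (\<tau>2 \<circ> iv \<sigma>2) = \<sigma>2 \<circ> iv \<tau>2"
    using iv_comp s by blast+
  ultimately show ?thesis using r by simp
qed

lemma WD1: assumes "okg g y" "piece f a1 \<sigma>1 b1 \<tau>1" "piece f a2 \<sigma>2 b2 \<tau>2"
    "is_prefix a1 (apath g y)" "is_prefix a2 (apath g y)" "length a1 \<le> length a2"
  shows "val g a1 (g \<circ> \<sigma>1 \<circ> iv \<tau>1) b1 y = val g a2 (g \<circ> \<sigma>2 \<circ> iv \<tau>2) b2 y"
proof -
  define r where "r = drop (length a1) a2"
  have a2: "a2 = a1 @ r" using prefixes_take[OF assms(4,5,6)] r_def by (metis append_take_drop_id)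
  have a2w: "a2 \<in> fwords m" using assms(3) by (simp add: piece_def)
  have rw: "r \<in> fwords m" using a2w a2 by (auto simp: fwords_def)
  have s: "\<sigma>1 \<in> G" "\<tau>1 \<in> G" "a1 \<in> fwords m" using assms(2) by (auto simp: piece_def)
  have p: "piece f a2 \<sigma>1 (b1 @ map (\<tau>1 \<circ> iv \<sigma>1) r) \<tau>1" using PEXT[OF assms(2) rw] a2 by simp
  have v: "val g a1 (g \<circ> \<sigma>1 \<circ> iv \<tau>1) b1 y = val g a2 (g \<circ> \<sigma>1 \<circ> iv \<tau>1) (b1 @ map (\<tau>1 \<circ> iv \<sigma>1) r) y"
    using val_EXT[OF assms(1) s(1,2,3) rw, of b1] assms(5) a2 by simp
  have "b1 @ map (\<tau>1 \<circ> iv \<sigma>1) r = b2 \<and> \<sigma>1 \<circ> iv \<tau>1 = \<sigma>2 \<circ> iv \<tau>2" using SN[OF p assms(3)] .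
  then show ?thesis using v by (simp add: comp_assoc)
qed

lemma WD: assumes "okg g y" "piece f a1 \<sigma>1 b1 \<tau>1" "piece f a2 \<sigma>2 b2 \<tau>2"
    "is_prefix a1 (apath g y)" "is_prefix a2 (apath g y)"
  shows "val g a1 (g \<circ> \<sigma>1 \<circ> iv \<tau>1) b1 y = val g a2 (g \<circ> \<sigma>2 \<circ> iv \<tau>2) b2 y"
proof (cases "length a1 \<le> length a2")
  case True then show ?thesis using WD1 assms by blast
next
  case False then show ?thesis using WD1[OF assms(1,3,2,5,4)] by simp
qed

lemma PV: assumes "okg g y" "piece f a \<sigma> b \<tau>" "is_prefix a (apath g y)"
  shows "Phi f y = val g a (g \<circ> \<sigma> \<circ> iv \<tau>) b y"
proof -
  have c: "cp y = g" using cp_eq[OF assms(1)] .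
  have i: "y \<in> cantor n \<and> inW y" using okg_inW[OF assms(1)] by simp
  show ?thesis unfolding Phi_def c using i
    apply simp
    apply (rule someI2[where a = "val g a (g \<circ> \<sigma> \<circ> iv \<tau>) b y"])
    using assms apply blast
    using WD[OF assms(1) _ assms(2) _ assms(3)] by blast
qed

end

context E begin

lemma VALF: "g \<in> G \<Longrightarrow> j < d \<Longrightarrow> is_prefix (Reg g a j) y \<Longrightarrow>
    val g a h b y = cat (Reg h b j) (\<lambda>i. y (i + length (Reg g a j)))"
  unfolding val_def tvT_def Reg_def using jT_eq[OF Uq_wr d0] by (simp add: Reg_def)

lemma VALP: assumes "okg g y" "a \<in> fwords m" "is_prefix a (apath g y)"
  shows "\<exists>j<d. \<exists>t\<in>cantor n. y = cat (Reg g a j) t \<and> (\<forall>h b. val g a h b y = cat (Reg h b j) t)"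
proof -
  obtain j where j: "j < d" "is_prefix (Reg g a j) y" using Reg_cover[OF assms(1,2)] assms(3) by blast
  have g: "g \<in> G" "y \<in> cantor n" using assms(1) okg_def by auto
  define t where "t = (\<lambda>i. y (i + length (Reg g a j)))"
  have "t \<in> cantor n" using g(2) by (simp add: t_def cantor_def)
  moreover have "y = cat (Reg g a j) t" using cat_shift[OF j(2)] t_def by simp
  moreover have "\<forall>h b. val g a h b y = cat (Reg h b j) t" using VALF[OF g(1) j] t_def by simp
  ultimately show ?thesis using j(1) by blast
qed

lemma VALOK: assumes "okg g y" "a \<in> fwords m" "is_prefix a (apath g y)" "h \<in> G" "b \<in> fwords m"
  shows "okg h (val g a h b y) \<and> is_prefix b (apath h (val g a h b y))"
proof -
  obtain j t where jt: "j < d" "t \<in> cantor n" "val g a h b y = cat (Reg h b j) t"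
    using VALP[OF assms(1-3)] by blast
  have c: "cat (Reg h b j) t \<in> cantor n" using cat_in_cantor[OF Reg_fwords[OF assms(4,5) jt(1)] jt(2)] .
  have o: "okg h (cat (Reg h b j) t)" using Reg_okg[OF assms(4) jt(1) c pre_cat] .
  have "is_prefix b (apath h (cat (Reg h b j) t))" using Reg_cover[OF o assms(5)] jt(1) pre_cat by blast
  then show ?thesis using o jt(3) by simp
qed

lemma VC: assumes "okg g y" "a \<in> fwords m" "is_prefix a (apath g y)" "h \<in> G" "b \<in> fwords m"
  shows "val h b k c (val g a h b y) = val g a k c y"
proof -
  obtain j t where jt: "j < d" "t \<in> cantor n" "y = cat (Reg g a j) t" "\<And>h b. val g a h b y = cat (Reg h b j) t"
    using VALP[OF assms(1-3)] by blast
  have "val h b k c (cat (Reg h b j) t) = cat (Reg k c j) (\<lambda>i. cat (Reg h b j) t (i + length (Reg h b j)))"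
    using VALF[OF assms(4) jt(1) pre_cat] .
  then show ?thesis using jt(4) shift_cat by simp
qed

lemma TBL: assumes "f \<in> Vset m G" "z \<in> cantor m"
  shows "\<exists>a \<sigma> b \<tau>. piece f a \<sigma> b \<tau> \<and> is_prefix a z"
proof -
  obtain k :: nat and p q \<sigma> \<tau> where t: "inj_on p {..<k}" "inj_on q {..<k}" "prefix_code m (p ` {..<k})" "prefix_code m (q ` {..<k})"
    "\<forall>i<k. \<sigma> i \<in> G \<and> \<tau> i \<in> G"
    "\<forall>i<k. \<forall>u\<in>cantor m. f (cat (p i) (\<sigma> i \<circ> u)) = cat (q i) (\<tau> i \<circ> u)"
    "\<forall>z. z \<notin> cantor m \<longrightarrow> f z = z"
    using assms(1) unfolding Vset_def mem_Collect_eq by (elim exE conjE) (rule that; assumption)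
  obtain s where s: "s \<in> p ` {..<k}" "is_prefix s z" using t(3) assms(2) unfolding prefix_code_def by blast
  then obtain i where i: "i < k" "s = p i" by blast
  have "p i \<in> fwords m" "q i \<in> fwords m" using t(3,4) i(1) unfolding prefix_code_def by auto
  then have "piece f (p i) (\<sigma> i) (q i) (\<tau> i)" using t(5,6) i(1) by (simp add: piece_def)
  then show ?thesis using s i by (intro exI[of _ "p i"] exI[of _ "\<sigma> i"] exI[of _ "q i"] exI[of _ "\<tau> i"]) simp
qed

lemma TBLX: assumes "piece f a \<sigma> b \<tau>" "is_prefix a z" "z \<in> cantor m"
  shows "\<exists>r. piece f (a @ r) \<sigma> (b @ map (\<tau> \<circ> iv \<sigma>) r) \<tau> \<and> is_prefix (a @ r) z \<and> length r = K \<and> r \<in> fwords m"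
proof -
  define r where "r = map z [length a..<length a + K]"
  have rw: "r \<in> fwords m" using assms(3) by (auto simp: r_def fwords_def cantor_def)
  have "is_prefix (a @ r) z" using assms(2) by (auto simp: is_prefix_def r_def nth_append)
  moreover have "length r = K" by (simp add: r_def)
  ultimately show ?thesis using PEXT[OF assms(1) rw] rw by blast
qed

lemma Phi_out: "\<not> (y \<in> cantor n \<and> inW y) \<Longrightarrow> Phi f y = y"
  unfolding Phi_def by (rule if_not_P)

lemma Phi_in: "y \<in> cantor n \<Longrightarrow> inW y \<Longrightarrow> \<exists>g. okg g y"
  unfolding inW_def okg_def by blast

lemma HOM: assumes f: "f \<in> Vset m G" and f': "f' \<in> Vset m G"
  shows "Phi (f \<circ> f') = Phi f \<circ> Phi f'"
proof
  fix y
  show "Phi (f \<circ> f') y = (Phi f \<circ> Phi f') y"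
  proof (cases "y \<in> cantor n \<and> inW y")
    case False
    then show ?thesis by (simp add: Phi_out)
  next
    case True
    then obtain g where og: "okg g y" using Phi_in by blast
    have gG: "g \<in> G" using og okg_def by blast
    define z where "z = apath g y"
    have zc: "z \<in> cantor m" using apath_cantor[OF og] z_def by simp
    obtain a0 \<sigma> b0 \<tau> where p0: "piece f' a0 \<sigma> b0 \<tau>" "is_prefix a0 z" using TBL[OF f' zc] by blast
    have st: "\<sigma> \<in> G" "\<tau> \<in> G" "a0 \<in> fwords m" "b0 \<in> fwords m" using p0 by (auto simp: piece_def)
    define h where "h = g \<circ> \<sigma> \<circ> iv \<tau>"
    have hG: "h \<in> G" unfolding h_def using G_comp G_inv gG st by blast
    define y1 where "y1 = val g a0 h b0 y"
    have ok1: "okg h y1" "is_prefix b0 (apath h y1)" using VALOK[OF og st(3) p0(2)[unfolded z_def] hG st(4)] y1_def by auto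
    have z1c: "apath h y1 \<in> cantor m" using apath_cantor[OF ok1(1)] .
    obtain a2 \<sigma>2 c2 \<tau>2 where p2: "piece f a2 \<sigma>2 c2 \<tau>2" "is_prefix a2 (apath h y1)" using TBL[OF f z1c] by blast
    have st2: "\<sigma>2 \<in> G" "\<tau>2 \<in> G" using p2 by (auto simp: piece_def)
    obtain r where r: "piece f' (a0 @ r) \<sigma> (b0 @ map (\<tau> \<circ> iv \<sigma>) r) \<tau>" "is_prefix (a0 @ r) z" "length r = length a2" "r \<in> fwords m"
      using TBLX[OF p0 zc] by blast
    define a where "a = a0 @ r"
    define b where "b = b0 @ map (\<tau> \<circ> iv \<sigma>) r"
    have pa: "piece f' a \<sigma> b \<tau>" "is_prefix a (apath g y)" using r a_def b_def z_def by auto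
    have aw: "a \<in> fwords m" "b \<in> fwords m" using pa by (auto simp: piece_def)
    have y1': "y1 = val g a h b y" unfolding y1_def a_def b_def h_def
      using val_EXT[OF og st(1,2,3) r(4), of b0] r(2) z_def by simp
    have ok2: "is_prefix b (apath h y1)" using VALOK[OF og aw(1) pa(2) hG aw(2)] y1' by simp
    have lb: "length a2 \<le> length b" using r(3) b_def by simp
    define r2 where "r2 = drop (length a2) b"
    have b2: "b = a2 @ r2" using prefixes_take[OF p2(2) ok2 lb] r2_def by (metis append_take_drop_id)
    have r2w: "r2 \<in> fwords m" using aw(2) b2 by (auto simp: fwords_def)
    define c where "c = c2 @ map (\<tau>2 \<circ> iv \<sigma>2) r2"
    have pb: "piece f b \<sigma>2 c \<tau>2" using PEXT[OF p2(1) r2w] b2 c_def by simp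
    define \<rho> where "\<rho> = \<tau>2 \<circ> iv \<sigma>2 \<circ> \<tau>"
    have \<rho>G: "\<rho> \<in> G" unfolding \<rho>_def using G_comp G_inv st st2 by blast
    have cw: "c \<in> fwords m" using pb by (simp add: piece_def)
    have pc: "piece (f \<circ> f') a \<sigma> c \<rho>"
      unfolding piece_def
    proof (intro conjI ballI)
      fix u assume u: "u \<in> cantor m"
      have w: "iv \<sigma>2 \<circ> \<tau> \<circ> u \<in> cantor m" using G_cantor G_inv st st2 u by (metis comp_assoc)
      have e: "\<sigma>2 \<circ> (iv \<sigma>2 \<circ> \<tau> \<circ> u) = \<tau> \<circ> u" using G_inv_o(1)[OF st2(1)] by (metis comp_assoc id_comp)
      have "(f \<circ> f') (cat a (\<sigma> \<circ> u)) = f (cat b (\<tau> \<circ> u))" using pa(1) u by (simp add: piece_def)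
      also have "... = f (cat b (\<sigma>2 \<circ> (iv \<sigma>2 \<circ> \<tau> \<circ> u)))" using e by simp
      also have "... = cat c (\<tau>2 \<circ> (iv \<sigma>2 \<circ> \<tau> \<circ> u))" using pb w by (simp add: piece_def)
      also have "... = cat c (\<rho> \<circ> u)" by (simp add: \<rho>_def comp_assoc)
      finally show "(f \<circ> f') (cat a (\<sigma> \<circ> u)) = cat c (\<rho> \<circ> u)" .
    qed (use st \<rho>G aw cw in auto)
    have L: "Phi (f \<circ> f') y = val g a (g \<circ> \<sigma> \<circ> iv \<rho>) c y" using PV[OF og pc pa(2)] .
    have "Phi f' y = y1" using PV[OF og pa(1) pa(2)] y1' h_def by simp
    moreover have "Phi f y1 = val h b (h \<circ> \<sigma>2 \<circ> iv \<tau>2) c y1" using PV[OF ok1(1) pb ok2] .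
    moreover have "val h b (h \<circ> \<sigma>2 \<circ> iv \<tau>2) c y1 = val g a (h \<circ> \<sigma>2 \<circ> iv \<tau>2) c y"
      using VC[OF og aw(1) pa(2) hG aw(2)] y1' by simp
    moreover have "g \<circ> \<sigma> \<circ> iv \<rho> = h \<circ> \<sigma>2 \<circ> iv \<tau>2"
    proof -
      have "iv \<rho> = iv \<tau> \<circ> iv (\<tau>2 \<circ> iv \<sigma>2)" unfolding \<rho>_def
        using iv_comp2[of "\<tau>2 \<circ> iv \<sigma>2" \<tau>] G_comp G_inv st st2 by blast
      also have "... = iv \<tau> \<circ> (\<sigma>2 \<circ> iv \<tau>2)" using iv_comp st2 by simp
      finally show ?thesis by (simp add: h_def comp_assoc)
    qed
    ultimately show ?thesis using L by simp
  qed
qed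

end

lemma T_strict: assumes "Uq d w" "0 < d" "x2 = x1 @ c' # s" "c'' \<noteq> c'" "\<forall>j<d. T d w x1 j = T d w x2 j"
  shows False
proof -
  define y1 where "y1 = cat (T d w (x1 @ [c'']) 0) (\<lambda>_. 0)"
  have "is_prefix (T d w (x1 @ [c'']) 0) y1" unfolding y1_def by (rule pre_cat)
  then obtain j where j: "j < d" "is_prefix (T d w x1 j) y1" using T_parent[OF assms(2), of 0 w x1 "[c'']" y1] assms(2) by blast
  then have "is_prefix (T d w ((x1 @ [c']) @ s) j) y1" using assms(3,5) by simp
  then obtain j' where j': "j' < d" "is_prefix (T d w (x1 @ [c']) j') y1" using T_parent[OF assms(2) j(1)] by blast
  have "x1 @ [c'] = x1 @ [c'']"
    using level_uniq[OF assms(1,2) j'(2) \<open>is_prefix (T d w (x1 @ [c'']) 0) y1\<close> _ j'(1) assms(2)] by simp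
  then show False using assms(4) by simp
qed

lemma CAT2: assumes "\<forall>t\<in>cantor n. cat u1 t = cat u2 t" "2 \<le> n" shows "u1 = u2"
proof -
  have c: "(\<lambda>_. 0) \<in> cantor n" "(\<lambda>_. 1) \<in> cantor n" using assms(2) by (auto simp: cantor_def)
  have e0: "cat u1 (\<lambda>_. 0) = cat u2 (\<lambda>_. 0)" and e1: "cat u1 (\<lambda>_. 1) = cat u2 (\<lambda>_. 1)" using assms(1) c by auto
  have len: "length u1 = length u2"
  proof (rule ccontr)
    assume "length u1 \<noteq> length u2"
    then consider "length u1 < length u2" | "length u2 < length u1" by linarith
    then show False
    proof cases
      case 1 then show False using fun_cong[OF e0, of "length u1"] fun_cong[OF e1, of "length u1"] by (simp add: cat_def)
    next
      case 2 then show False using fun_cong[OF e0, of "length u2"] fun_cong[OF e1, of "length u2"] by (simp add: cat_def)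
    qed
  qed
  have "u1 ! i = u2 ! i" if "i < length u1" for i using fun_cong[OF e0, of i] that len by (simp add: cat_def)
  then show ?thesis using len by (simp add: nth_equalityI)
qed

context E begin

lemma Vset_props: assumes "f \<in> Vset m G"
  obtains k :: nat and p q \<sigma> \<tau> where "inj_on p {..<k}" "inj_on q {..<k}" "prefix_code m (p ` {..<k})" "prefix_code m (q ` {..<k})"
    "\<forall>i<k. \<sigma> i \<in> G \<and> \<tau> i \<in> G"
    "\<forall>i<k. \<forall>u\<in>cantor m. f (cat (p i) (\<sigma> i \<circ> u)) = cat (q i) (\<tau> i \<circ> u)"
    "\<forall>z. z \<notin> cantor m \<longrightarrow> f z = z"
  using assms unfolding Vset_def mem_Collect_eq by (elim exE conjE) (rule that; assumption)

lemma INJ: assumes f1: "f1 \<in> Vset m G" and f2: "f2 \<in> Vset m G" and eq: "Phi f1 = Phi f2"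
  shows "f1 = f2"
proof
  fix z
  show "f1 z = f2 z"
  proof (cases "z \<in> cantor m")
    case False
    then show ?thesis using Vset_props[OF f1] Vset_props[OF f2] by metis
  next
    case zc: True
    obtain a1 \<sigma>1 b1 \<tau>1 where p1: "piece f1 a1 \<sigma>1 b1 \<tau>1" "is_prefix a1 z" using TBL[OF f1 zc] by blast
    obtain a2 \<sigma>2 b2 \<tau>2 where p2: "piece f2 a2 \<sigma>2 b2 \<tau>2" "is_prefix a2 z" using TBL[OF f2 zc] by blast
    obtain r1 where r1: "piece f1 (a1 @ r1) \<sigma>1 (b1 @ map (\<tau>1 \<circ> iv \<sigma>1) r1) \<tau>1" "is_prefix (a1 @ r1) z" "length r1 = length a2"
      using TBLX[OF p1 zc] by blast
    obtain r2 where r2: "piece f2 (a2 @ r2) \<sigma>2 (b2 @ map (\<tau>2 \<circ> iv \<sigma>2) r2) \<tau>2" "is_prefix (a2 @ r2) z" "length r2 = length a1"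
      using TBLX[OF p2 zc] by blast
    have "a1 @ r1 = a2 @ r2" using prefixes_same_len[OF r1(2) r2(2)] r1(3) r2(3) by simp
    define a where "a = a1 @ r1"
    define B1 where "B1 = b1 @ map (\<tau>1 \<circ> iv \<sigma>1) r1"
    define B2 where "B2 = b2 @ map (\<tau>2 \<circ> iv \<sigma>2) r2"
    have q1: "piece f1 a \<sigma>1 B1 \<tau>1" "is_prefix a z" using r1 a_def B1_def by auto
    have q2: "piece f2 a \<sigma>2 B2 \<tau>2" using r2 \<open>a1 @ r1 = a2 @ r2\<close> a_def B2_def by auto
    have st: "\<sigma>1 \<in> G" "\<tau>1 \<in> G" "\<sigma>2 \<in> G" "\<tau>2 \<in> G" "a \<in> fwords m" "B1 \<in> fwords m" "B2 \<in> fwords m"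
      using q1 q2 by (auto simp: piece_def)
    define h1 where "h1 = id \<circ> \<sigma>1 \<circ> iv \<tau>1"
    define h2 where "h2 = id \<circ> \<sigma>2 \<circ> iv \<tau>2"
    have hG: "h1 \<in> G" "h2 \<in> G" unfolding h1_def h2_def using G_comp G_inv st G_id by auto
    have RR: "Reg h1 B1 j = Reg h2 B2 j" if j: "j < d" for j
    proof -
      have "cat (Reg h1 B1 j) t = cat (Reg h2 B2 j) t" if t: "t \<in> cantor n" for t
      proof -
        define y where "y = cat (Reg id a j) t"
        have yc: "y \<in> cantor n" unfolding y_def using cat_in_cantor[OF Reg_fwords[OF G_id st(5) j] t] .
        have py: "is_prefix (Reg id a j) y" unfolding y_def by (rule pre_cat)
        have oy: "okg id y" using Reg_okg[OF G_id j yc py] .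
        have ay: "is_prefix a (apath id y)" using Reg_cover[OF oy st(5)] j py by blast
        have "Phi f1 y = cat (Reg h1 B1 j) t"
          using PV[OF oy q1(1) ay] VALF[OF G_id j py] shift_cat h1_def y_def by simp
        moreover have "Phi f2 y = cat (Reg h2 B2 j) t"
          using PV[OF oy q2(1) ay] VALF[OF G_id j py] shift_cat h2_def y_def by simp
        ultimately show ?thesis using eq by simp
      qed
      then show ?thesis using CAT2 n2 by blast
    qed
    have hh: "h1 = h2"
    proof -
      define Y where "Y = cat (Reg h1 B1 0) (\<lambda>_. 0)"
      have "is_prefix (Reg h1 B1 0) Y" "is_prefix (Reg h2 B2 0) Y" using RR[OF d0] pre_cat Y_def by metis+
      then obtain j1 j2 where "j1 < d" "is_prefix (wr h1 j1) Y" "j2 < d" "is_prefix (wr h2 j2) Y"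
        using Reg_root[OF hG(1) d0] Reg_root[OF hG(2) d0] by metis
      then show ?thesis using copy_uniq hG by blast
    qed
    have BB: "B1 = B2"
    proof -
      define Y where "Y = cat (Reg h1 B1 0) (\<lambda>_. 0)"
      have Yc: "Y \<in> cantor n" unfolding Y_def using cat_in_cantor[OF Reg_fwords[OF hG(1) st(6) d0]] n2 by (simp add: cantor_def)
      have pY: "is_prefix (Reg h1 B1 0) Y" "is_prefix (Reg h1 B2 0) Y" using RR[OF d0] pre_cat Y_def hh by metis+
      have oY: "okg h1 Y" using Reg_okg[OF hG(1) d0 Yc pY(1)] .
      have B1p: "is_prefix B1 (apath h1 Y)" "is_prefix B2 (apath h1 Y)"
        using Reg_cover[OF oY st(6)] Reg_cover[OF oY st(7)] pY d0 by blast+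
      have R2: "\<forall>j<d. T d (wr h1) (map h1 B1) j = T d (wr h1) (map h1 B2) j" using RR hh by (simp add: Reg_def)
      have nlt: False if "length Ba < length Bb" "is_prefix Ba (apath h1 Y)" "is_prefix Bb (apath h1 Y)"
        "\<forall>j<d. T d (wr h1) (map h1 Ba) j = T d (wr h1) (map h1 Bb) j" for Ba Bb
      proof -
        have "Ba = take (length Ba) Bb" using prefixes_take that by simp
        moreover have "drop (length Ba) Bb \<noteq> []" using that(1) by simp
        then obtain c s where "drop (length Ba) Bb = c # s" by (cases "drop (length Ba) Bb") auto
        ultimately have cs: "Bb = Ba @ c # s" by (metis append_take_drop_id)
        obtain c'' where c'': "c'' \<noteq> h1 c" by (metis n_not_Suc_n)
        show False using T_strict[OF Uq_wr[OF hG(1)] d0 _ c'', of "map h1 Bb" "map h1 Ba" "map h1 s"] cs that(4) by simp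
      qed
      have "length B1 = length B2" using nlt[OF _ B1p R2] nlt[of B2 B1] B1p R2 by (metis linorder_neqE_nat)
      then show ?thesis using prefixes_same_len[OF B1p] by simp
    qed
    have rho: "\<tau>1 \<circ> iv \<sigma>1 = \<tau>2 \<circ> iv \<sigma>2"
    proof -
      have "iv (\<sigma>1 \<circ> iv \<tau>1) = iv (\<sigma>2 \<circ> iv \<tau>2)" using hh h1_def h2_def by simp
      then show ?thesis using iv_comp st by simp
    qed
    define v where "v = (\<lambda>i. z (i + length a))"
    have vc: "v \<in> cantor m" using zc by (simp add: v_def cantor_def)
    have zz: "z = cat a v" using cat_shift[OF q1(2)] v_def by simp
    have "f1 z = cat B1 ((\<tau>1 \<circ> iv \<sigma>1) \<circ> v)"
    proof -
      have "\<sigma>1 \<circ> (iv \<sigma>1 \<circ> v) = v" using G_inv_o(1)[OF st(1)] by (metis comp_assoc id_comp)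
      moreover have "iv \<sigma>1 \<circ> v \<in> cantor m" using G_cantor G_inv st vc by blast
      ultimately show ?thesis using q1(1) zz unfolding piece_def by (metis comp_assoc)
    qed
    moreover have "f2 z = cat B2 ((\<tau>2 \<circ> iv \<sigma>2) \<circ> v)"
    proof -
      have "\<sigma>2 \<circ> (iv \<sigma>2 \<circ> v) = v" using G_inv_o(1)[OF st(3)] by (metis comp_assoc id_comp)
      moreover have "iv \<sigma>2 \<circ> v \<in> cantor m" using G_cantor G_inv st vc by blast
      ultimately show ?thesis using q2(1) zz unfolding piece_def by (metis comp_assoc)
    qed
    ultimately show ?thesis using BB rho by simp
  qed
qed

end

context E begin

definition BigS :: "nat list set \<Rightarrow> nat list set" where
  "BigS S = {Reg g s j | g s j. g \<in> G \<and> s \<in> S \<and> j < d} \<union> Cset"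

lemma pc_uniq: "prefix_code r S \<Longrightarrow> z \<in> cantor r \<Longrightarrow> s1 \<in> S \<Longrightarrow> s2 \<in> S \<Longrightarrow> is_prefix s1 z \<Longrightarrow> is_prefix s2 z \<Longrightarrow> s1 = s2"
  unfolding prefix_code_def by blast

lemma REGC: assumes "g \<in> G" "s \<in> fwords m" "j < d" shows "Reg g s j \<notin> Cset"
proof
  assume c: "Reg g s j \<in> Cset"
  define y where "y = cat (Reg g s j) (\<lambda>_. 0)"
  have py: "is_prefix (Reg g s j) y" unfolding y_def by (rule pre_cat)
  then have "inW y" using Reg_root[OF assms(1,3)] assms(1) unfolding inW_def by blast
  then obtain i where "i < N" "is_prefix (root i) y" using inW_iff by blast
  then show False using CB3 c py by blast
qed

lemma REGINJ: assumes "prefix_code m S" "s1 \<in> S" "s2 \<in> S" "g1 \<in> G" "g2 \<in> G" "j1 < d" "j2 < d"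
    "Reg g1 s1 j1 = Reg g2 s2 j2"
  shows "g1 = g2 \<and> s1 = s2 \<and> j1 = j2"
proof -
  have sw: "s1 \<in> fwords m" "s2 \<in> fwords m" using assms(1-3) unfolding prefix_code_def by auto
  define y where "y = cat (Reg g1 s1 j1) (\<lambda>_. 0)"
  have yc: "y \<in> cantor n" unfolding y_def using cat_in_cantor[OF Reg_fwords[OF assms(4) sw(1) assms(6)]] n2 by (simp add: cantor_def)
  have p1: "is_prefix (Reg g1 s1 j1) y" unfolding y_def by (rule pre_cat)
  have p2: "is_prefix (Reg g2 s2 j2) y" using p1 assms(8) by simp
  have o1: "okg g1 y" using Reg_okg[OF assms(4,6) yc p1] .
  have o2: "okg g2 y" using Reg_okg[OF assms(5,7) yc p2] .
  have gg: "g1 = g2" using cp_eq[OF o1] cp_eq[OF o2] by simp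
  have "is_prefix s1 (apath g1 y)" "is_prefix s2 (apath g1 y)"
    using Reg_cover[OF o1 sw(1)] Reg_cover[OF o1 sw(2)] p1 p2 gg assms(6,7) by blast+
  then have ss: "s1 = s2" using pc_uniq[OF assms(1) apath_cantor[OF o1] assms(2,3)] by blast
  have "j1 = j2" using level_uniq[OF Uq_wr[OF assms(4)] d0, of "map g1 s1" j1 y "map g1 s1" j2] p1 p2 gg ss assms(6,7)
    by (simp add: Reg_def)
  then show ?thesis using gg ss by simp
qed

lemma BIG: assumes "prefix_code m S" shows "prefix_code n (BigS S)"
proof -
  have fS: "finite S" and Sw: "S \<subseteq> fwords m" using assms unfolding prefix_code_def by auto
  have "Reg g s j \<in> (\<lambda>(g,s,j). Reg g s j) ` (G \<times> S \<times> {..<d})" if "g \<in> G" "s \<in> S" "j < d" for g s j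
    using that by (intro image_eqI[of _ _ "(g,s,j)"]) auto
  then have "{Reg g s j | g s j. g \<in> G \<and> s \<in> S \<and> j < d} \<subseteq> (\<lambda>(g,s,j). Reg g s j) ` (G \<times> S \<times> {..<d})" by blast
  moreover have "finite ((\<lambda>(g,s,j). Reg g s j) ` (G \<times> S \<times> {..<d}))" using finG fS by simp
  ultimately have fin: "finite (BigS S)" unfolding BigS_def using Cset_finite finite_subset by auto
  have sub: "BigS S \<subseteq> fwords n" unfolding BigS_def using Reg_fwords Cset_fwords Sw by blast
  have exun: "(\<exists>w. w \<in> BigS S \<and> is_prefix w z) \<and> (\<forall>w1 w2. w1 \<in> BigS S \<and> is_prefix w1 z \<and> w2 \<in> BigS S \<and> is_prefix w2 z \<longrightarrow> w1 = w2)"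
    if zc: "z \<in> cantor n" for z
  proof -
    have R: "\<exists>g s j. w = Reg g s j \<and> g \<in> G \<and> s \<in> S \<and> j < d" if "w \<in> BigS S" "w \<notin> Cset" for w
      using that unfolding BigS_def by blast
    show ?thesis
    proof (cases "inW z")
      case True
      then obtain g where og: "okg g z" using Phi_in zc by blast
      have gG: "g \<in> G" using og okg_def by blast
      obtain s where s: "s \<in> S" "is_prefix s (apath g z)" using assms apath_cantor[OF og] unfolding prefix_code_def by blast
      obtain j where j: "j < d" "is_prefix (Reg g s j) z" using Reg_cover[OF og] s Sw by blast
      have noC: "\<not> is_prefix c z" if "c \<in> Cset" for c
        using True inW_iff CB3 that by blast
      have U: "w = Reg g s j" if wB: "w \<in> BigS S" "is_prefix w z" for w
      proof -
        have "w \<notin> Cset" using noC wB by blast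
        then obtain g' s' j' where w: "w = Reg g' s' j'" "g' \<in> G" "s' \<in> S" "j' < d" using R wB(1) by blast
        have o': "okg g' z" using Reg_okg[OF w(2,4) zc] wB(2) w(1) by simp
        have gg: "g' = g" using cp_eq[OF o'] cp_eq[OF og] by simp
        have "is_prefix s' (apath g z)" using Reg_cover[OF og, of s'] Sw w wB(2) gg by blast
        then have ss: "s' = s" using pc_uniq[OF assms apath_cantor[OF og] w(3) s(1)] s(2) by blast
        have "j' = j" using level_uniq[OF Uq_wr[OF gG] d0, of "map g s" j' z "map g s" j] wB(2) w gg ss j
          by (simp add: Reg_def)
        then show ?thesis using w gg ss by simp
      qed
      have "\<exists>w. w \<in> BigS S \<and> is_prefix w z" using j s gG unfolding BigS_def by blast
      then show ?thesis using U by blast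
    next
      case False
      then obtain c where c: "c \<in> Cset" "is_prefix c z" using CB2[OF zc] inW_iff by blast
      have noR: "w \<in> Cset" if wB: "w \<in> BigS S" "is_prefix w z" for w
      proof (rule ccontr)
        assume "w \<notin> Cset"
        then obtain g' s' j' where w: "w = Reg g' s' j'" "g' \<in> G" "s' \<in> S" "j' < d" using R wB(1) by blast
        have "okg g' z" using Reg_okg[OF w(2,4) zc] wB(2) w(1) by simp
        then show False using False okg_inW by blast
      qed
      have "\<exists>w. w \<in> BigS S \<and> is_prefix w z" using c unfolding BigS_def by blast
      then show ?thesis using noR CB4 by blast
    qed
  qed
  have "\<forall>z\<in>cantor n. \<exists>!s. s \<in> BigS S \<and> is_prefix s z"
  proof
    fix z assume "z \<in> cantor n"
    then show "\<exists>!s. s \<in> BigS S \<and> is_prefix s z" using exun by blast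
  qed
  then show ?thesis using fin sub unfolding prefix_code_def by blast
qed

end

context E begin

lemma RC: "\<sigma> \<in> G \<Longrightarrow> \<tau> \<in> G \<Longrightarrow> (g \<circ> \<sigma> \<circ> iv \<tau>) \<circ> (\<tau> \<circ> iv \<sigma>) = g"
proof -
  assume s: "\<sigma> \<in> G" "\<tau> \<in> G"
  have "(g \<circ> \<sigma> \<circ> iv \<tau>) \<circ> (\<tau> \<circ> iv \<sigma>) = g \<circ> \<sigma> \<circ> (iv \<tau> \<circ> \<tau>) \<circ> iv \<sigma>"
    by (simp add: comp_assoc)
  also have "... = g" using G_inv_o[OF s(1)] G_inv_o[OF s(2)] by (simp add: comp_assoc)
  finally show ?thesis .
qed

lemma MEM: assumes f: "f \<in> Vset m G" shows "Phi f \<in> Vset n {id}"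
proof -
  obtain k :: nat and p q \<sigma> \<tau> where t: "inj_on p {..<k}" "inj_on q {..<k}" "prefix_code m (p ` {..<k})" "prefix_code m (q ` {..<k})"
    "\<forall>i<k. \<sigma> i \<in> G \<and> \<tau> i \<in> G"
    "\<forall>i<k. \<forall>u\<in>cantor m. f (cat (p i) (\<sigma> i \<circ> u)) = cat (q i) (\<tau> i \<circ> u)"
    "\<forall>z. z \<notin> cantor m \<longrightarrow> f z = z"
    by (rule Vset_props[OF f])
  have pw: "p i \<in> fwords m" "q i \<in> fwords m" if "i < k" for i
    using t(3,4) that unfolding prefix_code_def by auto
  define E1 where "E1 = {(Reg g (p i) j, Reg (g \<circ> \<sigma> i \<circ> iv (\<tau> i)) (q i) j) | g i j. g \<in> G \<and> i < k \<and> j < d}"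
  define E where "E = E1 \<union> (\<lambda>c. (c, c)) ` Cset"
  have "(Reg g (p i) j, Reg (g \<circ> \<sigma> i \<circ> iv (\<tau> i)) (q i) j) \<in> (\<lambda>(g,i,j). (Reg g (p i) j, Reg (g \<circ> \<sigma> i \<circ> iv (\<tau> i)) (q i) j)) ` (G \<times> {..<k} \<times> {..<d})"
    if "g \<in> G" "i < k" "j < d" for g i j
    using that by (intro image_eqI[of _ _ "(g,i,j)"]) auto
  then have "E1 \<subseteq> (\<lambda>(g,i,j). (Reg g (p i) j, Reg (g \<circ> \<sigma> i \<circ> iv (\<tau> i)) (q i) j)) ` (G \<times> {..<k} \<times> {..<d})"
    unfolding E1_def by blast
  moreover have "finite ((\<lambda>(g,i,j). (Reg g (p i) j, Reg (g \<circ> \<sigma> i \<circ> iv (\<tau> i)) (q i) j)) ` (G \<times> {..<k} \<times> {..<d}))"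
    using finG by simp
  ultimately have finE: "finite E" unfolding E_def using Cset_finite finite_subset by auto
  have fstE: "fst ` E = BigS (p ` {..<k})"
  proof
    show "fst ` E \<subseteq> BigS (p ` {..<k})"
    proof
      fix x assume "x \<in> fst ` E"
      then obtain e where ex: "e \<in> E" "x = fst e" by blast
      then consider (R) g i j where "e = (Reg g (p i) j, Reg (g \<circ> \<sigma> i \<circ> iv (\<tau> i)) (q i) j)" "g \<in> G" "i < k" "j < d"
        | (C) c where "e = (c, c)" "c \<in> Cset"
        unfolding E_def E1_def by blast
      then show "x \<in> BigS (p ` {..<k})"
      proof cases
        case R
        have "x = Reg g (p i) j" "p i \<in> p ` {..<k}" using ex R by auto
        then show ?thesis unfolding BigS_def using R by blast
      next
        case C then show ?thesis unfolding BigS_def using ex by simp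
      qed
    qed
    show "BigS (p ` {..<k}) \<subseteq> fst ` E"
    proof
      fix x assume "x \<in> BigS (p ` {..<k})"
      then consider (R) g i j where "x = Reg g (p i) j" "g \<in> G" "i < k" "j < d" | (C) "x \<in> Cset"
        unfolding BigS_def by blast
      then show "x \<in> fst ` E"
      proof cases
        case R
        then have "(x, Reg (g \<circ> \<sigma> i \<circ> iv (\<tau> i)) (q i) j) \<in> E" unfolding E_def E1_def by blast
        then show ?thesis by force
      next
        case C
        then have "(x, x) \<in> E" unfolding E_def by blast
        then show ?thesis by force
      qed
    qed
  qed
  have sndE: "snd ` E = BigS (q ` {..<k})"
  proof
    show "snd ` E \<subseteq> BigS (q ` {..<k})"
    proof
      fix x assume "x \<in> snd ` E"
      then obtain e where ex: "e \<in> E" "x = snd e" by blast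
      then consider (R) g i j where "e = (Reg g (p i) j, Reg (g \<circ> \<sigma> i \<circ> iv (\<tau> i)) (q i) j)" "g \<in> G" "i < k" "j < d"
        | (C) c where "e = (c, c)" "c \<in> Cset"
        unfolding E_def E1_def by blast
      then show "x \<in> BigS (q ` {..<k})"
      proof cases
        case R
        have "g \<circ> \<sigma> i \<circ> iv (\<tau> i) \<in> G" using G_comp G_inv t(5) R by blast
        moreover have "x = Reg (g \<circ> \<sigma> i \<circ> iv (\<tau> i)) (q i) j" "q i \<in> q ` {..<k}" using ex R by auto
        ultimately show ?thesis unfolding BigS_def using R by blast
      next
        case C then show ?thesis unfolding BigS_def using ex by simp
      qed
    qed
    show "BigS (q ` {..<k}) \<subseteq> snd ` E"
    proof
      fix x assume "x \<in> BigS (q ` {..<k})"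
      then consider (R) h i j where "x = Reg h (q i) j" "h \<in> G" "i < k" "j < d" | (C) "x \<in> Cset"
        unfolding BigS_def by blast
      then show "x \<in> snd ` E"
      proof cases
        case R
        define g where "g = h \<circ> \<tau> i \<circ> iv (\<sigma> i)"
        have gG: "g \<in> G" unfolding g_def using G_comp G_inv t(5) R by blast
        have "g \<circ> \<sigma> i \<circ> iv (\<tau> i) = h" unfolding g_def using RC[of "\<tau> i" "\<sigma> i" h] t(5) R by (simp add: comp_assoc)
        then have "(Reg g (p i) j, x) \<in> E" unfolding E_def E1_def using R gG by force
        then show ?thesis by force
      next
        case C
        then have "(x, x) \<in> E" unfolding E_def by blast
        then show ?thesis by force
      qed
    qed
  qed
  have injf: "inj_on fst E"
  proof
    fix e1 e2 assume e: "e1 \<in> E" "e2 \<in> E" "fst e1 = fst e2"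
    consider (RR) g1 i1 j1 g2 i2 j2 where "e1 = (Reg g1 (p i1) j1, Reg (g1 \<circ> \<sigma> i1 \<circ> iv (\<tau> i1)) (q i1) j1)" "g1 \<in> G" "i1 < k" "j1 < d"
       "e2 = (Reg g2 (p i2) j2, Reg (g2 \<circ> \<sigma> i2 \<circ> iv (\<tau> i2)) (q i2) j2)" "g2 \<in> G" "i2 < k" "j2 < d"
      | (RC1) g1 i1 j1 c where "e1 = (Reg g1 (p i1) j1, Reg (g1 \<circ> \<sigma> i1 \<circ> iv (\<tau> i1)) (q i1) j1)" "g1 \<in> G" "i1 < k" "j1 < d" "e2 = (c, c)" "c \<in> Cset"
      | (RC2) g2 i2 j2 c where "e2 = (Reg g2 (p i2) j2, Reg (g2 \<circ> \<sigma> i2 \<circ> iv (\<tau> i2)) (q i2) j2)" "g2 \<in> G" "i2 < k" "j2 < d" "e1 = (c, c)" "c \<in> Cset"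
      | (CC) c1 c2 where "e1 = (c1, c1)" "e2 = (c2, c2)"
      using e(1,2) unfolding E_def E1_def by blast
    then show "e1 = e2"
    proof cases
      case RR
      then have "g1 = g2 \<and> p i1 = p i2 \<and> j1 = j2"
        using REGINJ[OF t(3), of "p i1" "p i2" g1 g2 j1 j2] e(3) by auto
      moreover then have "i1 = i2" using t(1) RR by (meson inj_onD lessThan_iff)
      ultimately show ?thesis using RR by simp
    next
      case RC1 then show ?thesis using REGC pw e(3) by auto
    next
      case RC2 then show ?thesis using REGC pw e(3) by auto
    next
      case CC then show ?thesis using e(3) by simp
    qed
  qed
  have injs: "inj_on snd E"
  proof
    fix e1 e2 assume e: "e1 \<in> E" "e2 \<in> E" "snd e1 = snd e2"
    consider (RR) g1 i1 j1 g2 i2 j2 where "e1 = (Reg g1 (p i1) j1, Reg (g1 \<circ> \<sigma> i1 \<circ> iv (\<tau> i1)) (q i1) j1)" "g1 \<in> G" "i1 < k" "j1 < d"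
       "e2 = (Reg g2 (p i2) j2, Reg (g2 \<circ> \<sigma> i2 \<circ> iv (\<tau> i2)) (q i2) j2)" "g2 \<in> G" "i2 < k" "j2 < d"
      | (RC1) g1 i1 j1 c where "e1 = (Reg g1 (p i1) j1, Reg (g1 \<circ> \<sigma> i1 \<circ> iv (\<tau> i1)) (q i1) j1)" "g1 \<in> G" "i1 < k" "j1 < d" "e2 = (c, c)" "c \<in> Cset"
      | (RC2) g2 i2 j2 c where "e2 = (Reg g2 (p i2) j2, Reg (g2 \<circ> \<sigma> i2 \<circ> iv (\<tau> i2)) (q i2) j2)" "g2 \<in> G" "i2 < k" "j2 < d" "e1 = (c, c)" "c \<in> Cset"
      | (CC) c1 c2 where "e1 = (c1, c1)" "e2 = (c2, c2)"
      using e(1,2) unfolding E_def E1_def by blast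
    then show "e1 = e2"
    proof cases
      case RR
      have s12: "\<sigma> i1 \<in> G" "\<tau> i1 \<in> G" "\<sigma> i2 \<in> G" "\<tau> i2 \<in> G" using t(5) RR by auto
      have hG: "g1 \<circ> \<sigma> i1 \<circ> iv (\<tau> i1) \<in> G" "g2 \<circ> \<sigma> i2 \<circ> iv (\<tau> i2) \<in> G"
        using G_comp[OF G_comp[OF RR(2) s12(1)] G_inv[OF s12(2)]] G_comp[OF G_comp[OF RR(6) s12(3)] G_inv[OF s12(4)]] by auto
      have A: "g1 \<circ> \<sigma> i1 \<circ> iv (\<tau> i1) = g2 \<circ> \<sigma> i2 \<circ> iv (\<tau> i2) \<and> q i1 = q i2 \<and> j1 = j2"
        using REGINJ[OF t(4), of "q i1" "q i2", OF _ _ hG] e(3) RR by auto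
      then have ii: "i1 = i2" using t(2) RR by (meson inj_onD lessThan_iff)
      then have "g1 = g2" using A RC[OF s12(1,2), of g1] RC[OF s12(1,2), of g2] by simp
      then show ?thesis using RR A ii by simp
    next
      case RC1
      have "g1 \<circ> \<sigma> i1 \<circ> iv (\<tau> i1) \<in> G" using G_comp G_inv t(5) RC1 by blast
      then show ?thesis using REGC pw RC1 e(3) by auto
    next
      case RC2
      have "g2 \<circ> \<sigma> i2 \<circ> iv (\<tau> i2) \<in> G" using G_comp G_inv t(5) RC2 by blast
      then show ?thesis using REGC pw RC2 e(3) by auto
    next
      case CC then show ?thesis using e(3) by simp
    qed
  qed
  have pairs: "Phi f (cat (fst e) u) = cat (snd e) u" if e: "e \<in> E" and u: "u \<in> cantor n" for e u
  proof -
    consider (R) g i j where "e = (Reg g (p i) j, Reg (g \<circ> \<sigma> i \<circ> iv (\<tau> i)) (q i) j)" "g \<in> G" "i < k" "j < d"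
      | (C) c where "e = (c, c)" "c \<in> Cset"
      using e unfolding E_def E1_def by blast
    then show ?thesis
    proof cases
      case R
      define y where "y = cat (Reg g (p i) j) u"
      have yc: "y \<in> cantor n" unfolding y_def using cat_in_cantor[OF Reg_fwords[OF R(2) pw(1)[OF R(3)] R(4)] u] .
      have py: "is_prefix (Reg g (p i) j) y" unfolding y_def by (rule pre_cat)
      have oy: "okg g y" using Reg_okg[OF R(2,4) yc py] .
      have ay: "is_prefix (p i) (apath g y)" using Reg_cover[OF oy pw(1)[OF R(3)]] R(4) py by blast
      have pc: "piece f (p i) (\<sigma> i) (q i) (\<tau> i)" using t(5,6) pw R(3) by (simp add: piece_def)
      have "Phi f y = cat (Reg (g \<circ> \<sigma> i \<circ> iv (\<tau> i)) (q i) j) u"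
        using PV[OF oy pc ay] VALF[OF R(2,4) py] shift_cat y_def by simp
      then show ?thesis using R(1) y_def by simp
    next
      case C
      have "\<not> inW (cat c u)"
      proof
        assume "inW (cat c u)"
        then obtain i where "i < N" "is_prefix (root i) (cat c u)" using inW_iff by blast
        then show False using CB3 C(2) pre_cat by blast
      qed
      then show ?thesis using C Phi_out by simp
    qed
  qed
  obtain e where eb: "bij_betw e {0..<card E} E" using ex_bij_betw_nat_finite[OF finE] by blast
  define K where "K = card E"
  have eb': "bij_betw e {..<K} E" using eb K_def by (simp add: lessThan_atLeast0)
  have img: "e ` {..<K} = E" "inj_on e {..<K}" using eb' by (auto simp: bij_betw_def)
  have i1: "inj_on (fst \<circ> e) {..<K}" using comp_inj_on[OF img(2)] injf img(1) by simp
  have i2: "inj_on (snd \<circ> e) {..<K}" using comp_inj_on[OF img(2)] injs img(1) by simp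
  have "(fst \<circ> e) ` {..<K} = fst ` E" "(snd \<circ> e) ` {..<K} = snd ` E" using img(1) image_comp by metis+
  then have c1: "prefix_code n ((fst \<circ> e) ` {..<K})" and c2: "prefix_code n ((snd \<circ> e) ` {..<K})"
    using BIG[OF t(3)] BIG[OF t(4)] fstE sndE by simp_all
  have pr: "\<forall>i<K. \<forall>u\<in>cantor n. Phi f (cat ((fst \<circ> e) i) (id \<circ> u)) = cat ((snd \<circ> e) i) (id \<circ> u)"
    using pairs img(1) by auto
  have out: "\<forall>z. z \<notin> cantor n \<longrightarrow> Phi f z = z" using Phi_out by blast
  show ?thesis unfolding Vset_def mem_Collect_eq
    apply (rule exI[of _ K], rule exI[of _ "fst \<circ> e"], rule exI[of _ "snd \<circ> e"], rule exI[of _ "\<lambda>_. id"], rule exI[of _ "\<lambda>_. id"])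
    using i1 i2 c1 c2 pr out by simp
qed

end

lemma subgroup_id: "subgroup {id} (symA n)"
proof (rule subgroup.intro)
  show "{id} \<subseteq> carrier (symA n)" by (simp add: symA_def permutes_id)
  show "\<And>x y. x \<in> {id} \<Longrightarrow> y \<in> {id} \<Longrightarrow> x \<otimes>\<^bsub>symA n\<^esub> y \<in> {id}" by (simp add: symA_def)
  show "\<one>\<^bsub>symA n\<^esub> \<in> {id}" by (simp add: symA_def)
  fix x :: "nat \<Rightarrow> nat" assume x: "x \<in> {id}"
  have "m_inv (symA n) x = id"
    unfolding m_inv_def
  proof (rule the_equality)
    show "id \<in> carrier (symA n) \<and> x \<otimes>\<^bsub>symA n\<^esub> id = \<one>\<^bsub>symA n\<^esub> \<and> id \<otimes>\<^bsub>symA n\<^esub> x = \<one>\<^bsub>symA n\<^esub>"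
      using x by (simp add: symA_def permutes_id)
    fix y assume "y \<in> carrier (symA n) \<and> x \<otimes>\<^bsub>symA n\<^esub> y = \<one>\<^bsub>symA n\<^esub> \<and> y \<otimes>\<^bsub>symA n\<^esub> x = \<one>\<^bsub>symA n\<^esub>"
    then show "y = id" using x by (simp add: symA_def)
  qed
  then show "m_inv (symA n) x \<in> {id}" by simp
qed

theorem mainTheorem3:
  fixes m n :: nat and G :: "(nat \<Rightarrow> nat) set"
  assumes "2 \<le> m" and "m \<le> n" and "n mod (m - 1) = m mod (m - 1)"
    and "subgroup G (symA m)"
  shows "\<exists>H. subgroup H (symA n) \<and>
           (\<exists>\<phi>. \<phi> \<in> hom (Vgrp m G) (Vgrp n H) \<and> inj_on \<phi> (carrier (Vgrp m G)))"
proof -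
  have a: "(m - 1) dvd (n - m)" using mod_eq_dvd_iff_nat[of m n "m - 1"] assms(2,3) by simp
  have b: "(m - 1) dvd (n - m + (m - 1))" using dvd_add[OF a dvd_refl] .
  have c: "n - m + (m - 1) = n - 1" using assms(1,2) by simp
  have dv: "(m - 1) dvd (n - 1)" using b c by metis
  define d where "d = (n - 1) div (m - 1)"
  have nd: "n = Suc (d * (m - 1))" using dv assms(1,2) unfolding d_def by simp
  have d0: "0 < d" using nd assms(1,2) by (cases d) auto
  have finG: "finite G"
  proof -
    have "G \<subseteq> {s. s permutes {..<m}}" using subgroup.subset[OF assms(4)] by (auto simp: symA_def)
    moreover have "finite {s. s permutes {..<m}}" by (rule finite_permutations) simp
    ultimately show ?thesis by (rule finite_subset)
  qed
  obtain ix where ix: "bij_betw ix G {0..<card G}" using ex_bij_betw_finite_nat[OF finG] by blast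
  have ix': "bij_betw ix G {..<card G}" using ix by (simp add: lessThan_atLeast0)
  interpret E m n d G ix by (rule E.intro[OF assms(1) nd d0 assms(4) ix'])
  have hom: "Phi \<in> hom (Vgrp m G) (Vgrp n {id})"
    unfolding hom_def using MEM HOM by (auto simp: Vgrp_def)
  have inj: "inj_on Phi (carrier (Vgrp m G))"
    using INJ by (auto simp: Vgrp_def inj_on_def)
  show ?thesis using subgroup_id hom inj by blast
qed

end
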